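(* Let $(A,L',L'')$ be an almost twilled Lie-Rinehart algebra with $L'$ and $L''$ finitely generated and projective as $A$-modules. Then $(A,L',L'')$ is a twilled Lie-Rinehart algebra if and only if $(A,L,D)=(A,L'\ltimes(L'')^*,L''\ltimes(L')^* )$ is a Lie-Rinehart bialgebra.
   Context: $R$ commutative ring (with $2,3$ invertible), $A$ commutative $R$-algebra. Lie-Rinehart algebra $(A,L)$: $R$-Lie algebra and $A$-module with Lie morphism $L\to\mathrm{Der}_R(A)$ satisfying $(a\alpha)(b)=a\,\alpha(b)$, $[\alpha,a\beta]=\alpha(a)\beta+a[\alpha,\beta]$. Left $(A,L)$-module: $A$-module with left $L$-module structure, $(a\alpha)\cdot m=a(\alpha\cdot m)$, $\alpha\cdot(am)=\alpha(a)m+a(\alpha\cdot m)$. Almost twilled Lie-Rinehart algebra $(A,L',L'')$: Lie-Rinehart algebras $(A,L')$, $(A,L'')$ (brackets $[\cdot,\cdot]',[\cdot,\cdot]''$), a left $(A,L')$-module structure $x\cdot\xi$ on $L''$, a left $(A,L'')$-module structure $\xi\cdot x$ on $L'$; twilled if $L'\oplus L''$ with bracket $[(x,\xi),(y,\eta)]=([x,y]'+\xi\cdot y-\eta\cdot x,[\xi,\eta]''+x\cdot\eta-y\cdot\xi)$ and action $(x,\xi)(a)=x(a)+\xi(a)$ is a Lie-Rinehart algebra. $(L'')^*=\mathrm{Hom}_A(L'',A)$ is a left $(A,L')$-module via $(x\cdot\phi)(\xi)=x(\phi(\xi))-\phi(x\cdot\xi)$; $L'\ltimes(L'')^*$ is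 $L'\oplus(L'')^*$ with bracket $[(x,\phi),(y,\psi)]=([x,y]',x\cdot\psi-y\cdot\phi)$ and action $(x,\phi)(a)=x(a)$; $L''\ltimes(L')^*$ analogously. Lie-Rinehart bialgebra: $(A,L,D)$ with $L,D$ finitely generated projective $(R,A)$-Lie algebras, $D\cong\mathrm{Hom}_A(L,A)$, such that $d_*[x,y]=[d_*x,y]+[x,d_*y]$ for $x,y\in L$, where $d_*$ is the Lie-Rinehart differential on $\mathrm{Alt}_A(D,A)\cong\Lambda_AL$ (formula $(df)(\alpha_1,..,\alpha_n)=(-1)^n[\sum_i(-1)^{i-1}\alpha_i(f(..\widehat{\alpha_i}..))+\sum_{j<k}(-1)^{j+k}f([\alpha_j,\alpha_k],..)]$ for $D$) and $[\cdot,\cdot]$ the Gerstenhaber bracket on $\Lambda_AL$ induced by the Lie-Rinehart structure of $L$. *)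

theory Defs
  imports Main
begin

record ('a,'m) amod =
  mcarrier :: "'m set"
  madd :: "'m \<Rightarrow> 'm \<Rightarrow> 'm"
  mzero :: "'m"
  msmult :: "'a \<Rightarrow> 'm \<Rightarrow> 'm"

definition msub :: "('a::comm_ring_1,'m,'z) amod_scheme \<Rightarrow> 'm \<Rightarrow> 'm \<Rightarrow> 'm" where
  "msub M x y = madd M x (msmult M (-1) y)"

definition amodule :: "('a::comm_ring_1,'m,'z) amod_scheme \<Rightarrow> bool" where
  "amodule M \<longleftrightarrow>
     mzero M \<in> mcarrier M \<and>
     (\<forall>x\<in>mcarrier M. \<forall>y\<in>mcarrier M. madd M x y \<in> mcarrier M) \<and>
     (\<forall>a. \<forall>x\<in>mcarrier M. msmult M a x \<in> mcarrier M) \<and>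
     (\<forall>x\<in>mcarrier M. \<forall>y\<in>mcarrier M. \<forall>z\<in>mcarrier M.
        madd M (madd M x y) z = madd M x (madd M y z)) \<and>
     (\<forall>x\<in>mcarrier M. \<forall>y\<in>mcarrier M. madd M x y = madd M y x) \<and>
     (\<forall>x\<in>mcarrier M. madd M (mzero M) x = x) \<and>
     (\<forall>x\<in>mcarrier M. \<exists>y\<in>mcarrier M. madd M x y = mzero M) \<and>
     (\<forall>a. \<forall>x\<in>mcarrier M. \<forall>y\<in>mcarrier M.
        msmult M a (madd M x y) = madd M (msmult M a x) (msmult M a y)) \<and>
     (\<forall>a b. \<forall>x\<in>mcarrier M. msmult M (a + b) x = madd M (msmult M a x) (msmult M b x)) \<and>
     (\<forall>a b. \<forall>x\<in>mcarrier M. msmult M (a * b) x = msmult M a (msmult M b x)) \<and>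
     (\<forall>x\<in>mcarrier M. msmult M 1 x = x)"

definition alin :: "('a::comm_ring_1,'m,'z) amod_scheme \<Rightarrow> ('a,'n,'w) amod_scheme \<Rightarrow> ('m \<Rightarrow> 'n) \<Rightarrow> bool" where
  "alin M N f \<longleftrightarrow>
     (\<forall>x\<in>mcarrier M. f x \<in> mcarrier N) \<and>
     (\<forall>x\<in>mcarrier M. \<forall>y\<in>mcarrier M. f (madd M x y) = madd N (f x) (f y)) \<and>
     (\<forall>a. \<forall>x\<in>mcarrier M. f (msmult M a x) = msmult N a (f x))"

definition selfmod :: "('a::comm_ring_1,'a) amod" where
  "selfmod = \<lparr>mcarrier = UNIV, madd = (+), mzero = 0, msmult = (*)\<rparr>"

text \<open>The free module A^n, realised as sequences vanishing from index n on.\<close>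
definition freemod :: "nat \<Rightarrow> ('a::comm_ring_1, nat \<Rightarrow> 'a) amod" where
  "freemod n = \<lparr>mcarrier = {v. \<forall>k\<ge>n. v k = 0},
                madd = (\<lambda>v w k. v k + w k), mzero = (\<lambda>k. 0),
                msmult = (\<lambda>a v k. a * v k)\<rparr>"

text \<open>Finitely generated projective = direct summand (retract) of a finitely generated free module.\<close>
definition fgp :: "('a::comm_ring_1,'m,'z) amod_scheme \<Rightarrow> bool" where
  "fgp M \<longleftrightarrow> amodule M \<and>
     (\<exists>n i p. alin M (freemod n) i \<and> alin (freemod n) M p \<and> (\<forall>x\<in>mcarrier M. p (i x) = x))"

text \<open>The dual module Hom_A(M,A); functions are extensional (zero outside the carrier).\<close>
definition dualmod :: "('a::comm_ring_1,'m,'z) amod_scheme \<Rightarrow> ('a, 'm \<Rightarrow> 'a) amod" where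
  "dualmod M = \<lparr>mcarrier = {\<phi>. alin M selfmod \<phi> \<and> (\<forall>x. x \<notin> mcarrier M \<longrightarrow> \<phi> x = 0)},
                madd = (\<lambda>\<phi> \<psi> x. \<phi> x + \<psi> x), mzero = (\<lambda>x. 0),
                msmult = (\<lambda>a \<phi> x. a * \<phi> x)\<rparr>"

definition alg_map :: "('r::comm_ring_1 \<Rightarrow> 'a::comm_ring_1) \<Rightarrow> bool" where
  "alg_map \<iota> \<longleftrightarrow> \<iota> 1 = 1 \<and> (\<forall>r s. \<iota> (r + s) = \<iota> r + \<iota> s) \<and> (\<forall>r s. \<iota> (r * s) = \<iota> r * \<iota> s)"

definition is_der :: "('r::comm_ring_1 \<Rightarrow> 'a::comm_ring_1) \<Rightarrow> ('a \<Rightarrow> 'a) \<Rightarrow> bool" where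
  "is_der \<iota> d \<longleftrightarrow> (\<forall>x y. d (x + y) = d x + d y) \<and> (\<forall>r x. d (\<iota> r * x) = \<iota> r * d x) \<and>
                   (\<forall>x y. d (x * y) = x * d y + y * d x)"

record ('a,'m) lr = "('a,'m) amod" +
  lbr :: "'m \<Rightarrow> 'm \<Rightarrow> 'm"
  anc :: "'m \<Rightarrow> 'a \<Rightarrow> 'a"

definition lr_alg :: "('r::comm_ring_1 \<Rightarrow> 'a::comm_ring_1) \<Rightarrow> ('a,'m,'z) lr_scheme \<Rightarrow> bool" where
  "lr_alg \<iota> L \<longleftrightarrow> amodule L \<and>
     (\<forall>x\<in>mcarrier L. \<forall>y\<in>mcarrier L. lbr L x y \<in> mcarrier L) \<and>
     (\<forall>x\<in>mcarrier L. \<forall>y\<in>mcarrier L. \<forall>z\<in>mcarrier L.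
        lbr L (madd L x y) z = madd L (lbr L x z) (lbr L y z) \<and>
        lbr L z (madd L x y) = madd L (lbr L z x) (lbr L z y)) \<and>
     (\<forall>r. \<forall>x\<in>mcarrier L. \<forall>y\<in>mcarrier L.
        lbr L (msmult L (\<iota> r) x) y = msmult L (\<iota> r) (lbr L x y) \<and>
        lbr L x (msmult L (\<iota> r) y) = msmult L (\<iota> r) (lbr L x y)) \<and>
     (\<forall>x\<in>mcarrier L. lbr L x x = mzero L) \<and>
     (\<forall>x\<in>mcarrier L. \<forall>y\<in>mcarrier L. \<forall>z\<in>mcarrier L.
        madd L (madd L (lbr L x (lbr L y z)) (lbr L y (lbr L z x))) (lbr L z (lbr L x y)) = mzero L) \<and>
     (\<forall>x\<in>mcarrier L. is_der \<iota> (anc L x)) \<and>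
     (\<forall>x\<in>mcarrier L. \<forall>y\<in>mcarrier L. \<forall>b. anc L (madd L x y) b = anc L x b + anc L y b) \<and>
     (\<forall>a. \<forall>x\<in>mcarrier L. \<forall>b. anc L (msmult L a x) b = a * anc L x b) \<and>
     (\<forall>x\<in>mcarrier L. \<forall>y\<in>mcarrier L. \<forall>b.
        anc L (lbr L x y) b = anc L x (anc L y b) - anc L y (anc L x b)) \<and>
     (\<forall>a. \<forall>x\<in>mcarrier L. \<forall>y\<in>mcarrier L.
        lbr L x (msmult L a y) = madd L (msmult L (anc L x a) y) (msmult L a (lbr L x y)))"

definition lr_module :: "('a::comm_ring_1,'m,'z) lr_scheme \<Rightarrow> ('a,'n,'w) amod_scheme \<Rightarrow> ('m \<Rightarrow> 'n \<Rightarrow> 'n) \<Rightarrow> bool" where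
  "lr_module L M act \<longleftrightarrow> amodule M \<and>
     (\<forall>x\<in>mcarrier L. \<forall>m\<in>mcarrier M. act x m \<in> mcarrier M) \<and>
     (\<forall>x\<in>mcarrier L. \<forall>y\<in>mcarrier L. \<forall>m\<in>mcarrier M. act (madd L x y) m = madd M (act x m) (act y m)) \<and>
     (\<forall>x\<in>mcarrier L. \<forall>m\<in>mcarrier M. \<forall>n\<in>mcarrier M. act x (madd M m n) = madd M (act x m) (act x n)) \<and>
     (\<forall>x\<in>mcarrier L. \<forall>y\<in>mcarrier L. \<forall>m\<in>mcarrier M.
        act (lbr L x y) m = msub M (act x (act y m)) (act y (act x m))) \<and>
     (\<forall>a. \<forall>x\<in>mcarrier L. \<forall>m\<in>mcarrier M. act (msmult L a x) m = msmult M a (act x m)) \<and>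
     (\<forall>a. \<forall>x\<in>mcarrier L. \<forall>m\<in>mcarrier M.
        act x (msmult M a m) = madd M (msmult M (anc L x a) m) (msmult M a (act x m)))"

definition almost_twilled ::
  "('r::comm_ring_1 \<Rightarrow> 'a::comm_ring_1) \<Rightarrow> ('a,'l1) lr \<Rightarrow> ('a,'l2) lr \<Rightarrow>
   ('l1 \<Rightarrow> 'l2 \<Rightarrow> 'l2) \<Rightarrow> ('l2 \<Rightarrow> 'l1 \<Rightarrow> 'l1) \<Rightarrow> bool" where
  "almost_twilled \<iota> L1 L2 act12 act21 \<longleftrightarrow>
     lr_alg \<iota> L1 \<and> lr_alg \<iota> L2 \<and> lr_module L1 L2 act12 \<and> lr_module L2 L1 act21"

definition twsum ::
  "('a::comm_ring_1,'l1) lr \<Rightarrow> ('a,'l2) lr \<Rightarrow> ('l1 \<Rightarrow> 'l2 \<Rightarrow> 'l2) \<Rightarrow> ('l2 \<Rightarrow> 'l1 \<Rightarrow> 'l1) \<Rightarrow> ('a, 'l1 \<times> 'l2) lr" where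
  "twsum L1 L2 act12 act21 = \<lparr>
     mcarrier = mcarrier L1 \<times> mcarrier L2,
     madd = (\<lambda>(x,\<xi>) (y,\<eta>). (madd L1 x y, madd L2 \<xi> \<eta>)),
     mzero = (mzero L1, mzero L2),
     msmult = (\<lambda>a (x,\<xi>). (msmult L1 a x, msmult L2 a \<xi>)),
     lbr = (\<lambda>(x,\<xi>) (y,\<eta>).
        (msub L1 (madd L1 (lbr L1 x y) (act21 \<xi> y)) (act21 \<eta> x),
         msub L2 (madd L2 (lbr L2 \<xi> \<eta>) (act12 x \<eta>)) (act12 y \<xi>))),
     anc = (\<lambda>(x,\<xi>) a. anc L1 x a + anc L2 \<xi> a)\<rparr>"

definition twilled ::
  "('r::comm_ring_1 \<Rightarrow> 'a::comm_ring_1) \<Rightarrow> ('a,'l1) lr \<Rightarrow> ('a,'l2) lr \<Rightarrow>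
   ('l1 \<Rightarrow> 'l2 \<Rightarrow> 'l2) \<Rightarrow> ('l2 \<Rightarrow> 'l1 \<Rightarrow> 'l1) \<Rightarrow> bool" where
  "twilled \<iota> L1 L2 act12 act21 \<longleftrightarrow>
     almost_twilled \<iota> L1 L2 act12 act21 \<and> lr_alg \<iota> (twsum L1 L2 act12 act21)"

definition coact :: "('a::comm_ring_1,'l1) lr \<Rightarrow> ('a,'l2) lr \<Rightarrow> ('l1 \<Rightarrow> 'l2 \<Rightarrow> 'l2) \<Rightarrow>
                     'l1 \<Rightarrow> ('l2 \<Rightarrow> 'a) \<Rightarrow> ('l2 \<Rightarrow> 'a)" where
  "coact L1 L2 act x \<phi> = (\<lambda>\<xi>. if \<xi> \<in> mcarrier L2 then anc L1 x (\<phi> \<xi>) - \<phi> (act x \<xi>) else 0)"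

definition semid :: "('a::comm_ring_1,'l1) lr \<Rightarrow> ('a,'l2) lr \<Rightarrow> ('l1 \<Rightarrow> 'l2 \<Rightarrow> 'l2) \<Rightarrow>
                     ('a, 'l1 \<times> ('l2 \<Rightarrow> 'a)) lr" where
  "semid L1 L2 act = \<lparr>
     mcarrier = mcarrier L1 \<times> mcarrier (dualmod L2),
     madd = (\<lambda>(x,\<phi>) (y,\<psi>). (madd L1 x y, (\<lambda>\<xi>. \<phi> \<xi> + \<psi> \<xi>))),
     mzero = (mzero L1, (\<lambda>\<xi>. 0)),
     msmult = (\<lambda>a (x,\<phi>). (msmult L1 a x, (\<lambda>\<xi>. a * \<phi> \<xi>))),
     lbr = (\<lambda>(x,\<phi>) (y,\<psi>). (lbr L1 x y,
              (\<lambda>\<xi>. coact L1 L2 act x \<psi> \<xi> - coact L1 L2 act y \<phi> \<xi>))),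
     anc = (\<lambda>(x,\<phi>) a. anc L1 x a)\<rparr>"

definition natpair :: "('l2 \<times> ('l1 \<Rightarrow> 'a::comm_ring_1)) \<Rightarrow> ('l1 \<times> ('l2 \<Rightarrow> 'a)) \<Rightarrow> 'a" where
  "natpair = (\<lambda>(\<xi>,\<psi>) (x,\<phi>). \<phi> \<xi> + \<psi> x)"

text \<open>D is identified with Hom_A(L,A) via the pairing; Alt_A(D,A) \<cong> \<Lambda>_A L, so x \<in> L is the
  1-form \<alpha> \<mapsto> pair \<alpha> x, and 2-forms are functions of two arguments in D.\<close>

definition dstar :: "('a::comm_ring_1,'d) lr \<Rightarrow> ('d \<Rightarrow> 'l \<Rightarrow> 'a) \<Rightarrow> 'l \<Rightarrow> 'd \<Rightarrow> 'd \<Rightarrow> 'a" where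
  "dstar D pair x \<alpha> \<beta> = anc D \<alpha> (pair \<beta> x) - anc D \<beta> (pair \<alpha> x) - pair (lbr D \<alpha> \<beta>) x"

definition coad :: "('a::comm_ring_1,'l) lr \<Rightarrow> ('a,'d) lr \<Rightarrow> ('d \<Rightarrow> 'l \<Rightarrow> 'a) \<Rightarrow> 'l \<Rightarrow> 'd \<Rightarrow> 'd" where
  "coad L D pair x \<alpha> = (THE \<gamma>. \<gamma> \<in> mcarrier D \<and>
      (\<forall>z\<in>mcarrier L. pair \<gamma> z = anc L x (pair \<alpha> z) - pair \<alpha> (lbr L x z)))"

text \<open>Gerstenhaber bracket [x,\<omega>] of x \<in> L = \<Lambda>^1 L with \<omega> \<in> \<Lambda>^2 L \<cong> Alt^2_A(D,A)
  (the derivation extending [x,-] on L and x(-) on A).\<close>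
definition gbr12 :: "('a::comm_ring_1,'l) lr \<Rightarrow> ('a,'d) lr \<Rightarrow> ('d \<Rightarrow> 'l \<Rightarrow> 'a) \<Rightarrow>
                     'l \<Rightarrow> ('d \<Rightarrow> 'd \<Rightarrow> 'a) \<Rightarrow> 'd \<Rightarrow> 'd \<Rightarrow> 'a" where
  "gbr12 L D pair x \<omega> \<alpha> \<beta> =
     anc L x (\<omega> \<alpha> \<beta>) - \<omega> (coad L D pair x \<alpha>) \<beta> - \<omega> \<alpha> (coad L D pair x \<beta>)"

text \<open>Gerstenhaber bracket [\<omega>,x] = -(-1)^{(2-1)(1-1)}[x,\<omega>] = -[x,\<omega>].\<close>
definition gbr21 :: "('a::comm_ring_1,'l) lr \<Rightarrow> ('a,'d) lr \<Rightarrow> ('d \<Rightarrow> 'l \<Rightarrow> 'a) \<Rightarrow>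
                     ('d \<Rightarrow> 'd \<Rightarrow> 'a) \<Rightarrow> 'l \<Rightarrow> 'd \<Rightarrow> 'd \<Rightarrow> 'a" where
  "gbr21 L D pair \<omega> x \<alpha> \<beta> = - gbr12 L D pair x \<omega> \<alpha> \<beta>"

definition lr_bialgebra :: "('r::comm_ring_1 \<Rightarrow> 'a::comm_ring_1) \<Rightarrow> ('a,'l) lr \<Rightarrow> ('a,'d) lr \<Rightarrow>
                            ('d \<Rightarrow> 'l \<Rightarrow> 'a) \<Rightarrow> bool" where
  "lr_bialgebra \<iota> L D pair \<longleftrightarrow>
     lr_alg \<iota> L \<and> lr_alg \<iota> D \<and> fgp L \<and> fgp D \<and>
     alin D (dualmod L) (\<lambda>\<alpha> z. if z \<in> mcarrier L then pair \<alpha> z else 0) \<and>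
     bij_betw (\<lambda>\<alpha> z. if z \<in> mcarrier L then pair \<alpha> z else 0) (mcarrier D) (mcarrier (dualmod L)) \<and>
     (\<forall>x\<in>mcarrier L. \<forall>y\<in>mcarrier L. \<forall>\<alpha>\<in>mcarrier D. \<forall>\<beta>\<in>mcarrier D.
        dstar D pair (lbr L x y) \<alpha> \<beta> =
          gbr21 L D pair (dstar D pair x) y \<alpha> \<beta> + gbr12 L D pair x (dstar D pair y) \<alpha> \<beta>)"

end

theory Submission
  imports Defs
begin

lemma freemod_simps[simp]:
  "mcarrier (freemod n) = {v. \<forall>k\<ge>n. v k = 0}"
  "madd (freemod n) = (\<lambda>v w k. v k + w k)"
  "mzero (freemod n) = (\<lambda>k. 0)"
  "msmult (freemod n) = (\<lambda>a v k. a * v k)"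
  by (simp_all add: freemod_def)

lemma selfmod_simps[simp]:
  "mcarrier selfmod = UNIV" "madd selfmod = (+)" "mzero selfmod = 0" "msmult selfmod = (*)"
  by (simp_all add: selfmod_def)

lemma dualmod_simps[simp]:
  "mcarrier (dualmod M) = {\<phi>. alin M selfmod \<phi> \<and> (\<forall>x. x \<notin> mcarrier M \<longrightarrow> \<phi> x = 0)}"
  "madd (dualmod M) = (\<lambda>\<phi> \<psi> x. \<phi> x + \<psi> x)"
  "mzero (dualmod M) = (\<lambda>x. 0)"
  "msmult (dualmod M) = (\<lambda>a \<phi> x. a * \<phi> x)"
  by (simp_all add: dualmod_def)

locale fmod =
  fixes M :: "('a::comm_ring_1,'m,'z) amod_scheme" and n :: nat
    and i :: "'m \<Rightarrow> nat \<Rightarrow> 'a" and p :: "(nat \<Rightarrow> 'a) \<Rightarrow> 'm"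
  assumes am: "amodule M" and ilin: "alin M (freemod n) i" and plin: "alin (freemod n) M p"
    and pi: "\<forall>x\<in>mcarrier M. p (i x) = x"
begin

abbreviation "C \<equiv> mcarrier M"

lemma add_cl[intro,simp]: "x \<in> C \<Longrightarrow> y \<in> C \<Longrightarrow> madd M x y \<in> C"
  using am unfolding amodule_def by auto
lemma sm_cl[intro,simp]: "x \<in> C \<Longrightarrow> msmult M a x \<in> C"
  using am unfolding amodule_def by auto
lemma z_cl[intro,simp]: "mzero M \<in> C"
  using am unfolding amodule_def by auto
lemma sub_cl[intro,simp]: "x \<in> C \<Longrightarrow> y \<in> C \<Longrightarrow> msub M x y \<in> C"
  unfolding msub_def by simp

lemma i_fm: "x \<in> C \<Longrightarrow> k \<ge> n \<Longrightarrow> i x k = 0"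
  using ilin unfolding alin_def by auto
lemma i_add[simp]: "x \<in> C \<Longrightarrow> y \<in> C \<Longrightarrow> i (madd M x y) k = i x k + i y k"
  using ilin unfolding alin_def by auto
lemma i_sm[simp]: "x \<in> C \<Longrightarrow> i (msmult M a x) k = a * i x k"
  using ilin unfolding alin_def by auto
lemma i_z[simp]: "i (mzero M) k = 0"
proof -
  have "madd M (mzero M) (mzero M) = mzero M" using am unfolding amodule_def by blast
  hence "i (mzero M) k + i (mzero M) k = i (mzero M) k" using i_add[of "mzero M" "mzero M" k] by simp
  thus ?thesis by simp
qed
lemma i_sub[simp]: "x \<in> C \<Longrightarrow> y \<in> C \<Longrightarrow> i (msub M x y) k = i x k - i y k"
  unfolding msub_def by simp

lemma ext: "x \<in> C \<Longrightarrow> y \<in> C \<Longrightarrow> (\<And>k. i x k = i y k) \<Longrightarrow> x = y"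
  using pi by (metis ext)

lemma p_add: "v \<in> mcarrier (freemod n) \<Longrightarrow> w \<in> mcarrier (freemod n) \<Longrightarrow> p (\<lambda>k. v k + w k) = madd M (p v) (p w)"
  using plin unfolding alin_def by auto
lemma p_sm: "v \<in> mcarrier (freemod n) \<Longrightarrow> p (\<lambda>k. a * v k) = msmult M a (p v)"
  using plin unfolding alin_def by auto
lemma p_cl: "v \<in> mcarrier (freemod n) \<Longrightarrow> p v \<in> C"
  using plin unfolding alin_def by auto

definition ev :: "nat \<Rightarrow> nat \<Rightarrow> 'a" where "ev k = (\<lambda>j. if j = k then 1 else 0)"

definition cf :: "nat \<Rightarrow> 'm \<Rightarrow> 'a" where "cf k = (\<lambda>x. if x \<in> C then i x k else 0)"

lemma cf_dual: "cf k \<in> mcarrier (dualmod M)"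
  by (auto simp: cf_def alin_def)

lemma sep: "x \<in> C \<Longrightarrow> y \<in> C \<Longrightarrow> (\<And>\<phi>. \<phi> \<in> mcarrier (dualmod M) \<Longrightarrow> \<phi> x = \<phi> y) \<Longrightarrow> x = y"
  apply (rule ext, assumption+)
  subgoal premises prems for k using prems(3)[of "cf k"] cf_dual[of k] prems(1,2) by (simp add: cf_def)
  done

lemma free_lin:
  fixes G :: "(nat \<Rightarrow> 'a) \<Rightarrow> 'a"
  assumes gadd: "\<And>v w. v \<in> mcarrier (freemod n) \<Longrightarrow> w \<in> mcarrier (freemod n) \<Longrightarrow> G (\<lambda>k. v k + w k) = G v + G w"
    and gsm: "\<And>v a. v \<in> mcarrier (freemod n) \<Longrightarrow> G (\<lambda>k. a * v k) = a * G v"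
    and v: "v \<in> mcarrier (freemod n)"
  shows "G v = (\<Sum>k<n. v k * G (ev k))"
proof -
  have "\<And>m. m \<le> n \<Longrightarrow> G (\<lambda>j. if j < m then v j else 0) = (\<Sum>k<m. v k * G (ev k))"
  proof -
    fix m show "m \<le> n \<Longrightarrow> G (\<lambda>j. if j < m then v j else 0) = (\<Sum>k<m. v k * G (ev k))"
    proof (induction m)
      case 0
      have "G (\<lambda>k. 0 * (0::'a)) = 0 * G (\<lambda>k. 0)" by (rule gsm) simp
      then show ?case by simp
    next
      case (Suc m)
      have e: "(\<lambda>j. if j < Suc m then v j else 0) = (\<lambda>k. (\<lambda>j. if j < m then v j else 0) k + (\<lambda>k. v m * ev m k) k)"
        by (auto simp: ev_def fun_eq_iff less_Suc_eq)
      have "ev m \<in> mcarrier (freemod n)" using Suc by (auto simp: ev_def)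
      then have "G (\<lambda>k. v m * ev m k) = v m * G (ev m)" by (rule gsm)
      moreover have "G (\<lambda>k. (\<lambda>j. if j < m then v j else 0) k + (\<lambda>k. v m * ev m k) k)
          = G (\<lambda>j. if j < m then v j else 0) + G (\<lambda>k. v m * ev m k)"
        by (rule gadd) (use Suc in \<open>auto simp: ev_def\<close>)
      ultimately show ?case using Suc by (simp add: e)
    qed
  qed
  from this[of n] have "G (\<lambda>j. if j < n then v j else 0) = (\<Sum>k<n. v k * G (ev k))" by simp
  moreover have "(\<lambda>j. if j < n then v j else 0) = v" using v by (auto simp: fun_eq_iff)
  ultimately show ?thesis by simp
qed

lemma ev_cl: "k < n \<Longrightarrow> ev k \<in> mcarrier (freemod n)" by (auto simp: ev_def)

lemma dual_expand:
  assumes "\<phi> \<in> mcarrier (dualmod M)" "x \<in> C"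
  shows "\<phi> x = (\<Sum>k<n. i x k * \<phi> (p (ev k)))"
proof -
  have al: "alin M selfmod \<phi>" using assms by simp
  have "\<phi> (p (i x)) = (\<Sum>k<n. i x k * \<phi> (p (ev k)))"
  proof (rule free_lin[where G="\<lambda>v. \<phi> (p v)"])
    show "i x \<in> mcarrier (freemod n)" using assms i_fm by auto
  next
    fix v w :: "nat \<Rightarrow> 'a" assume "v \<in> mcarrier (freemod n)" "w \<in> mcarrier (freemod n)"
    then show "\<phi> (p (\<lambda>k. v k + w k)) = \<phi> (p v) + \<phi> (p w)"
      using al p_add p_cl unfolding alin_def by auto
  next
    fix v :: "nat \<Rightarrow> 'a" and a assume "v \<in> mcarrier (freemod n)"
    then show "\<phi> (p (\<lambda>k. a * v k)) = a * \<phi> (p v)"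
      using al p_sm p_cl unfolding alin_def by auto
  qed
  then show ?thesis using pi assms by simp
qed

end

context fmod begin
lemma du_add[simp]: "\<phi> \<in> mcarrier (dualmod M) \<Longrightarrow> x \<in> C \<Longrightarrow> y \<in> C \<Longrightarrow> \<phi> (madd M x y) = \<phi> x + \<phi> y"
  by (simp add: alin_def)
lemma du_sm[simp]: "\<phi> \<in> mcarrier (dualmod M) \<Longrightarrow> x \<in> C \<Longrightarrow> \<phi> (msmult M a x) = a * \<phi> x"
  by (simp add: alin_def)
lemma du_out: "\<phi> \<in> mcarrier (dualmod M) \<Longrightarrow> x \<notin> C \<Longrightarrow> \<phi> x = 0"
  by simp
lemma du_sub[simp]: "\<phi> \<in> mcarrier (dualmod M) \<Longrightarrow> x \<in> C \<Longrightarrow> y \<in> C \<Longrightarrow> \<phi> (msub M x y) = \<phi> x - \<phi> y"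
  by (simp add: msub_def)
lemma z_sm: "x \<in> C \<Longrightarrow> msmult M 0 x = mzero M"
  by (rule ext) auto
lemma du_z[simp]: "\<phi> \<in> mcarrier (dualmod M) \<Longrightarrow> \<phi> (mzero M) = 0"
  using du_sm[of \<phi> "mzero M" 0] z_sm[of "mzero M"] by simp
end

locale lra = fmod L n i p for L :: "('a::comm_ring_1,'m) lr" and n i p +
  fixes \<iota> :: "'r::comm_ring_1 \<Rightarrow> 'a"
  assumes lr: "lr_alg \<iota> L" and alg: "alg_map \<iota>"
begin
lemmas lrc = lr[unfolded lr_alg_def]
abbreviation "br \<equiv> lbr L"
abbreviation "an \<equiv> anc L"

lemma br_cl[simp,intro]: "x \<in> C \<Longrightarrow> y \<in> C \<Longrightarrow> br x y \<in> C"
  using lrc[THEN conjunct2, THEN conjunct1] by blast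
lemma br_addL[simp]: "x \<in> C \<Longrightarrow> y \<in> C \<Longrightarrow> z \<in> C \<Longrightarrow> br (madd L x y) z = madd L (br x z) (br y z)"
  using lrc[THEN conjunct2, THEN conjunct2, THEN conjunct1] by blast
lemma br_addR[simp]: "x \<in> C \<Longrightarrow> y \<in> C \<Longrightarrow> z \<in> C \<Longrightarrow> br z (madd L x y) = madd L (br z x) (br z y)"
  using lrc[THEN conjunct2, THEN conjunct2, THEN conjunct1] by blast
lemma br_alt: "x \<in> C \<Longrightarrow> br x x = mzero L"
  using lrc[THEN conjunct2, THEN conjunct2, THEN conjunct2, THEN conjunct2, THEN conjunct1] by blast
lemma br_jac: "x \<in> C \<Longrightarrow> y \<in> C \<Longrightarrow> z \<in> C \<Longrightarrow>
   madd L (madd L (br x (br y z)) (br y (br z x))) (br z (br x y)) = mzero L"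
  using lrc[THEN conjunct2, THEN conjunct2, THEN conjunct2, THEN conjunct2, THEN conjunct2, THEN conjunct1] by blast
lemma an_der: "x \<in> C \<Longrightarrow> is_der \<iota> (an x)"
  using lrc[THEN conjunct2, THEN conjunct2, THEN conjunct2, THEN conjunct2, THEN conjunct2, THEN conjunct2, THEN conjunct1] by blast
lemma an_add[simp]: "x \<in> C \<Longrightarrow> y \<in> C \<Longrightarrow> an (madd L x y) b = an x b + an y b"
  using lrc[THEN conjunct2, THEN conjunct2, THEN conjunct2, THEN conjunct2, THEN conjunct2, THEN conjunct2, THEN conjunct2, THEN conjunct1] by blast
lemma an_sm[simp]: "x \<in> C \<Longrightarrow> an (msmult L a x) b = a * an x b"
  using lrc[THEN conjunct2, THEN conjunct2, THEN conjunct2, THEN conjunct2, THEN conjunct2, THEN conjunct2, THEN conjunct2, THEN conjunct2, THEN conjunct1] by blast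
lemma an_br[simp]: "x \<in> C \<Longrightarrow> y \<in> C \<Longrightarrow> an (br x y) b = an x (an y b) - an y (an x b)"
  using lrc[THEN conjunct2, THEN conjunct2, THEN conjunct2, THEN conjunct2, THEN conjunct2, THEN conjunct2, THEN conjunct2, THEN conjunct2, THEN conjunct2, THEN conjunct1] by blast
lemma br_leib[simp]: "x \<in> C \<Longrightarrow> y \<in> C \<Longrightarrow> br x (msmult L a y) = madd L (msmult L (an x a) y) (msmult L a (br x y))"
  using lrc[THEN conjunct2, THEN conjunct2, THEN conjunct2, THEN conjunct2, THEN conjunct2, THEN conjunct2, THEN conjunct2, THEN conjunct2, THEN conjunct2, THEN conjunct2] by blast
lemma br_iotaL: "x \<in> C \<Longrightarrow> y \<in> C \<Longrightarrow> br (msmult L (\<iota> r) x) y = msmult L (\<iota> r) (br x y)"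
  using lrc[THEN conjunct2, THEN conjunct2, THEN conjunct2, THEN conjunct1] by blast

lemma d_add[simp]: "x \<in> C \<Longrightarrow> an x (u + v) = an x u + an x v"
  using an_der unfolding is_der_def by auto
lemma d_mult[simp]: "x \<in> C \<Longrightarrow> an x (u * v) = u * an x v + v * an x u"
  using an_der unfolding is_der_def by auto
lemma d_zero[simp]: "x \<in> C \<Longrightarrow> an x 0 = 0"
  using d_add[of x 0 0] by simp
lemma d_uminus[simp]: "x \<in> C \<Longrightarrow> an x (- u) = - an x u"
proof -
  assume x: "x \<in> C"
  have "an x (u + - u) = an x u + an x (- u)" using d_add[OF x] .
  hence "0 = an x u + an x (- u)" using x by (simp del: d_add)
  thus ?thesis by (simp add: eq_neg_iff_add_eq_0 add.commute)
qed
lemma d_diff[simp]: "x \<in> C \<Longrightarrow> an x (u - v) = an x u - an x v"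
  using d_add[of x u "-v"] by (simp del: d_add)
lemma d_one[simp]: "x \<in> C \<Longrightarrow> an x 1 = 0"
  using d_mult[of x 1 1] by simp
lemma d_iota[simp]: "x \<in> C \<Longrightarrow> an x (\<iota> r) = 0"
proof -
  assume x: "x \<in> C"
  have "an x (\<iota> r * 1) = \<iota> r * an x 1" using an_der[OF x] unfolding is_der_def by blast
  thus ?thesis using x by (simp del: d_mult)
qed

lemma an_z[simp]: "an (mzero L) b = 0"
  using an_sm[of "mzero L" 0 b] z_sm[of "mzero L"] by simp
lemma an_sub[simp]: "x \<in> C \<Longrightarrow> y \<in> C \<Longrightarrow> an (msub L x y) b = an x b - an y b"
  by (simp add: msub_def)

lemma i_br_anti: "x \<in> C \<Longrightarrow> y \<in> C \<Longrightarrow> i (br y x) k = - i (br x y) k"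
proof -
  assume xy: "x \<in> C" "y \<in> C"
  have "br (madd L x y) (madd L x y) = mzero L" using br_alt xy by simp
  hence "i (br (madd L x y) (madd L x y)) k = 0" by simp
  moreover have "i (br (madd L x y) (madd L x y)) k = i (br x y) k + i (br y x) k"
    using xy br_alt[OF xy(1)] br_alt[OF xy(2)] by simp
  ultimately have "i (br x y) k + i (br y x) k = 0" by simp
  thus ?thesis by (metis add_eq_0_iff)
qed

lemma i_br_zL[simp]: "x \<in> C \<Longrightarrow> i (br (mzero L) x) k = 0"
proof -
  assume x: "x \<in> C"
  have "br (madd L (mzero L) (mzero L)) x = br (mzero L) x" using am unfolding amodule_def by auto
  hence "i (br (mzero L) x) k + i (br (mzero L) x) k = i (br (mzero L) x) k" using x
    by (metis br_addL i_add z_cl br_cl)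
  thus ?thesis by simp
qed
lemma i_br_zR[simp]: "x \<in> C \<Longrightarrow> i (br x (mzero L)) k = 0"
  using i_br_anti[of "mzero L" x] by simp
lemma br_zL[simp]: "x \<in> C \<Longrightarrow> br (mzero L) x = mzero L" by (rule ext) auto
lemma br_zR[simp]: "x \<in> C \<Longrightarrow> br x (mzero L) = mzero L" by (rule ext) auto

lemma i_br_smL[simp]: "x \<in> C \<Longrightarrow> y \<in> C \<Longrightarrow> i (br (msmult L a x) y) k = a * i (br x y) k - an y a * i x k"
proof -
  assume xy: "x \<in> C" "y \<in> C"
  have "an y a * i x k - a * i (br x y) k = - i (br (msmult L a x) y) k"
    using i_br_anti[of "msmult L a x" y k] i_br_anti[of x y k] xy by simp
  thus ?thesis by (metis minus_diff_eq minus_minus)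
qed

lemma i_jac: "x \<in> C \<Longrightarrow> y \<in> C \<Longrightarrow> z \<in> C \<Longrightarrow>
   i (br x (br y z)) k + i (br y (br z x)) k + i (br z (br x y)) k = 0"
  using arg_cong[OF br_jac, of x y z "\<lambda>u. i u k"] by simp
end

locale lrm = L: lra L n i p \<iota> + M: fmod M m j q
  for L :: "('a::comm_ring_1,'l) lr" and n i p \<iota> and M :: "('a,'m) lr" and m j q +
  fixes act :: "'l \<Rightarrow> 'm \<Rightarrow> 'm"
  assumes lm: "lr_module L M act"
begin
lemmas lmc = lm[unfolded lr_module_def]
lemma act_cl[simp,intro]: "x \<in> L.C \<Longrightarrow> u \<in> M.C \<Longrightarrow> act x u \<in> M.C"
  using lmc[THEN conjunct2, THEN conjunct1] by blast
lemma act_addL[simp]: "x \<in> L.C \<Longrightarrow> y \<in> L.C \<Longrightarrow> u \<in> M.C \<Longrightarrow> act (madd L x y) u = madd M (act x u) (act y u)"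
  using lmc[THEN conjunct2, THEN conjunct2, THEN conjunct1] by blast
lemma act_addR[simp]: "x \<in> L.C \<Longrightarrow> u \<in> M.C \<Longrightarrow> v \<in> M.C \<Longrightarrow> act x (madd M u v) = madd M (act x u) (act x v)"
  using lmc[THEN conjunct2, THEN conjunct2, THEN conjunct2, THEN conjunct1] by blast
lemma act_br[simp]: "x \<in> L.C \<Longrightarrow> y \<in> L.C \<Longrightarrow> u \<in> M.C \<Longrightarrow> act (lbr L x y) u = msub M (act x (act y u)) (act y (act x u))"
  using lmc[THEN conjunct2, THEN conjunct2, THEN conjunct2, THEN conjunct2, THEN conjunct1] by blast
lemma act_smL[simp]: "x \<in> L.C \<Longrightarrow> u \<in> M.C \<Longrightarrow> act (msmult L a x) u = msmult M a (act x u)"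
  using lmc[THEN conjunct2, THEN conjunct2, THEN conjunct2, THEN conjunct2, THEN conjunct2, THEN conjunct1] by blast
lemma act_smR[simp]: "x \<in> L.C \<Longrightarrow> u \<in> M.C \<Longrightarrow> act x (msmult M a u) = madd M (msmult M (anc L x a) u) (msmult M a (act x u))"
  using lmc[THEN conjunct2, THEN conjunct2, THEN conjunct2, THEN conjunct2, THEN conjunct2, THEN conjunct2] by blast
lemma act_zL[simp]: "u \<in> M.C \<Longrightarrow> act (mzero L) u = mzero M"
  using act_smL[of "mzero L" u 0] L.z_sm[of "mzero L"] M.z_sm[of "act (mzero L) u"] by simp
lemma act_zR[simp]: "x \<in> L.C \<Longrightarrow> act x (mzero M) = mzero M"
proof -
  assume x: "x \<in> L.C"
  have "act x (mzero M) = act x (msmult M 0 (mzero M))" using M.z_sm by simp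
  also have "\<dots> = madd M (msmult M (anc L x 0) (mzero M)) (msmult M 0 (act x (mzero M)))"
    by (rule act_smR) (use x in auto)
  finally have e: "act x (mzero M) = madd M (msmult M (anc L x 0) (mzero M)) (msmult M 0 (act x (mzero M)))" .
  have "j (act x (mzero M)) k = 0" for k
    by (subst e) (use x in simp)
  thus ?thesis by (intro M.ext) (use x in auto)
qed
lemma act_subL[simp]: "x \<in> L.C \<Longrightarrow> y \<in> L.C \<Longrightarrow> u \<in> M.C \<Longrightarrow> act (msub L x y) u = msub M (act x u) (act y u)"
  by (simp add: msub_def)
lemma act_subR[simp]: "x \<in> L.C \<Longrightarrow> u \<in> M.C \<Longrightarrow> v \<in> M.C \<Longrightarrow> act x (msub M u v) = msub M (act x u) (act x v)"
  by (rule M.ext) (auto simp: msub_def)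
end

declare dualmod_simps(1)[simp del]
lemma D_iff: "\<phi> \<in> mcarrier (dualmod M) \<longleftrightarrow> alin M selfmod \<phi> \<and> (\<forall>x. x \<notin> mcarrier M \<longrightarrow> \<phi> x = 0)"
  by (simp add: dualmod_simps(1))

context fmod begin
lemmas amc = am[unfolded amodule_def]
lemma am_zero: "mzero M \<in> C"
  using amc[THEN conjunct1] by blast
lemma am_addc: "\<forall>x\<in>C. \<forall>y\<in>C. madd M x y \<in> C"
  using amc[THEN conjunct2, THEN conjunct1] by blast
lemma am_smc: "\<forall>a. \<forall>x\<in>C. msmult M a x \<in> C"
  using amc[THEN conjunct2, THEN conjunct2, THEN conjunct1] by blast
lemma am_assoc: "\<forall>x\<in>C. \<forall>y\<in>C. \<forall>z\<in>C. madd M (madd M x y) z = madd M x (madd M y z)"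
  using amc[THEN conjunct2, THEN conjunct2, THEN conjunct2, THEN conjunct1] by blast
lemma am_comm: "\<forall>x\<in>C. \<forall>y\<in>C. madd M x y = madd M y x"
  using amc[THEN conjunct2, THEN conjunct2, THEN conjunct2, THEN conjunct2, THEN conjunct1] by blast
lemma am_lz: "\<forall>x\<in>C. madd M (mzero M) x = x"
  using amc[THEN conjunct2, THEN conjunct2, THEN conjunct2, THEN conjunct2, THEN conjunct2, THEN conjunct1] by blast
lemma am_inv: "\<forall>x\<in>C. \<exists>y\<in>C. madd M x y = mzero M"
  using amc[THEN conjunct2, THEN conjunct2, THEN conjunct2, THEN conjunct2, THEN conjunct2, THEN conjunct2, THEN conjunct1] by blast
lemma am_d1: "\<forall>a. \<forall>x\<in>C. \<forall>y\<in>C. msmult M a (madd M x y) = madd M (msmult M a x) (msmult M a y)"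
  using amc[THEN conjunct2, THEN conjunct2, THEN conjunct2, THEN conjunct2, THEN conjunct2, THEN conjunct2, THEN conjunct2, THEN conjunct1] by blast
lemma am_d2: "\<forall>a b. \<forall>x\<in>C. msmult M (a + b) x = madd M (msmult M a x) (msmult M b x)"
  using amc[THEN conjunct2, THEN conjunct2, THEN conjunct2, THEN conjunct2, THEN conjunct2, THEN conjunct2, THEN conjunct2, THEN conjunct2, THEN conjunct1] by blast
lemma am_sma: "\<forall>a b. \<forall>x\<in>C. msmult M (a * b) x = msmult M a (msmult M b x)"
  using amc[THEN conjunct2, THEN conjunct2, THEN conjunct2, THEN conjunct2, THEN conjunct2, THEN conjunct2, THEN conjunct2, THEN conjunct2, THEN conjunct2, THEN conjunct1] by blast
lemma am_one: "\<forall>x\<in>C. msmult M 1 x = x"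
  using amc[THEN conjunct2, THEN conjunct2, THEN conjunct2, THEN conjunct2, THEN conjunct2, THEN conjunct2, THEN conjunct2, THEN conjunct2, THEN conjunct2, THEN conjunct2] by blast
lemma add_lz[simp]: "x \<in> C \<Longrightarrow> madd M (mzero M) x = x" using am_lz by blast
lemma add_rz[simp]: "x \<in> C \<Longrightarrow> madd M x (mzero M) = x" using am_lz am_comm by (metis z_cl)
declare z_sm[simp] du_out[simp]
end

context lrm begin

abbreviation "D \<equiv> mcarrier (dualmod M)"
abbreviation "ca \<equiv> coact L M act"
abbreviation "S \<equiv> semid L M act"

lemma ca_in[simp]: "\<zeta> \<in> M.C \<Longrightarrow> ca x \<phi> \<zeta> = anc L x (\<phi> \<zeta>) - \<phi> (act x \<zeta>)"
  by (simp add: coact_def)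
lemma ca_out[simp]: "\<zeta> \<notin> M.C \<Longrightarrow> ca x \<phi> \<zeta> = 0"
  by (simp add: coact_def)

lemma dual_ext: "\<phi> \<in> D \<Longrightarrow> \<psi> \<in> D \<Longrightarrow> (\<And>\<zeta>. \<zeta> \<in> M.C \<Longrightarrow> \<phi> \<zeta> = \<psi> \<zeta>) \<Longrightarrow> \<phi> = \<psi>"
  using M.du_out by (metis ext)

lemma ca_dual[simp,intro]: "x \<in> L.C \<Longrightarrow> \<phi> \<in> D \<Longrightarrow> ca x \<phi> \<in> D"
  unfolding D_iff alin_def
  by (auto simp: algebra_simps)

lemma S_simps[simp]:
  "mcarrier S = L.C \<times> D"
  "madd S = (\<lambda>(x,\<phi>) (y,\<psi>). (madd L x y, (\<lambda>\<xi>. \<phi> \<xi> + \<psi> \<xi>)))"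
  "mzero S = (mzero L, (\<lambda>\<xi>. 0))"
  "msmult S = (\<lambda>a (x,\<phi>). (msmult L a x, (\<lambda>\<xi>. a * \<phi> \<xi>)))"
  "lbr S = (\<lambda>(x,\<phi>) (y,\<psi>). (lbr L x y, (\<lambda>\<xi>. ca x \<psi> \<xi> - ca y \<phi> \<xi>)))"
  "anc S = (\<lambda>(x,\<phi>) a. anc L x a)"
  by (simp_all add: semid_def)

lemma D_add[simp,intro]: "\<phi> \<in> D \<Longrightarrow> \<psi> \<in> D \<Longrightarrow> (\<lambda>\<xi>. \<phi> \<xi> + \<psi> \<xi>) \<in> D"
  unfolding D_iff alin_def by (auto simp: algebra_simps)
lemma D_sm[simp,intro]: "\<phi> \<in> D \<Longrightarrow> (\<lambda>\<xi>. a * \<phi> \<xi>) \<in> D"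
  unfolding D_iff alin_def by (auto simp: algebra_simps)
lemma D_diff[simp,intro]: "\<phi> \<in> D \<Longrightarrow> \<psi> \<in> D \<Longrightarrow> (\<lambda>\<xi>. \<phi> \<xi> - \<psi> \<xi>) \<in> D"
  unfolding D_iff alin_def by (auto simp: algebra_simps)
lemma D_z[simp,intro]: "(\<lambda>\<xi>. 0) \<in> D"
  unfolding D_iff alin_def by auto

lemma S_amod: "amodule S"
proof -
  have inv: "\<exists>y\<in>mcarrier S. madd S x y = mzero S" if xS: "x \<in> mcarrier S" for x
  proof -
    obtain u \<phi> where x: "x = (u,\<phi>)" "u \<in> L.C" "\<phi> \<in> D" using xS by auto
    obtain v where v: "v \<in> L.C" "madd L u v = mzero L" using L.am_inv x by blast
    show ?thesis using x v by (intro bexI[of _ "(v, \<lambda>\<xi>. - \<phi> \<xi>)"]) (auto simp: D_sm[of \<phi> "-1", simplified])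
  qed
  show ?thesis unfolding amodule_def
    using L.am inv unfolding amodule_def by (auto simp: algebra_simps)
qed


lemma ca_def': "ca x \<phi> = (\<lambda>\<zeta>. if \<zeta> \<in> M.C then anc L x (\<phi> \<zeta>) - \<phi> (act x \<zeta>) else 0)"
  by (simp add: coact_def fun_eq_iff)

lemma S_lr: "lr_alg \<iota> S"
  unfolding lr_alg_def
proof (intro conjI)
  show "amodule S" by (rule S_amod)
  show "\<forall>x\<in>mcarrier S. \<forall>y\<in>mcarrier S. lbr S x y \<in> mcarrier S" by auto
  show "\<forall>x\<in>mcarrier S. \<forall>y\<in>mcarrier S. \<forall>z\<in>mcarrier S.
     lbr S (madd S x y) z = madd S (lbr S x z) (lbr S y z) \<and> lbr S z (madd S x y) = madd S (lbr S z x) (lbr S z y)"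
    by (auto simp: ca_def' fun_eq_iff algebra_simps)
  show "\<forall>r. \<forall>x\<in>mcarrier S. \<forall>y\<in>mcarrier S.
     lbr S (msmult S (\<iota> r) x) y = msmult S (\<iota> r) (lbr S x y) \<and> lbr S x (msmult S (\<iota> r) y) = msmult S (\<iota> r) (lbr S x y)"
    by (auto simp: ca_def' fun_eq_iff algebra_simps L.br_iotaL)
  show "\<forall>x\<in>mcarrier S. lbr S x x = mzero S"
    by (auto simp: L.br_alt)
  show "\<forall>x\<in>mcarrier S. \<forall>y\<in>mcarrier S. \<forall>z\<in>mcarrier S.
     madd S (madd S (lbr S x (lbr S y z)) (lbr S y (lbr S z x))) (lbr S z (lbr S x y)) = mzero S"
    by (auto simp: ca_def' fun_eq_iff algebra_simps L.br_jac)
  show "\<forall>x\<in>mcarrier S. is_der \<iota> (anc S x)"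
    by (auto simp: L.an_der)
  show "\<forall>x\<in>mcarrier S. \<forall>y\<in>mcarrier S. \<forall>b. anc S (madd S x y) b = anc S x b + anc S y b"
    by auto
  show "\<forall>a. \<forall>x\<in>mcarrier S. \<forall>b. anc S (msmult S a x) b = a * anc S x b"
    by auto
  show "\<forall>x\<in>mcarrier S. \<forall>y\<in>mcarrier S. \<forall>b. anc S (lbr S x y) b = anc S x (anc S y b) - anc S y (anc S x b)"
    by auto
  show "\<forall>a. \<forall>x\<in>mcarrier S. \<forall>y\<in>mcarrier S.
     lbr S x (msmult S a y) = madd S (msmult S (anc S x a) y) (msmult S a (lbr S x y))"
    by (auto simp: ca_def' fun_eq_iff algebra_simps)
qed


definition "jd \<phi> = (\<lambda>k. if k < m then \<phi> (q (M.ev k)) else 0)"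
definition "qd v = (\<lambda>\<zeta>. if \<zeta> \<in> M.C then (\<Sum>k<m. v k * j \<zeta> k) else 0)"
definition "II = (\<lambda>(x,\<phi>). (\<lambda>k. if k < n then i x k else jd \<phi> (k - n)))"
definition "PP v = (p (\<lambda>k. if k < n then v k else 0), qd (\<lambda>k. v (k + n)))"

lemma qd_D: "qd v \<in> D"
  unfolding D_iff alin_def qd_def by (auto simp: sum.distrib sum_distrib_left algebra_simps)

lemma S_fgp: "fgp S"
  unfolding fgp_def
proof (intro conjI exI)
  show "amodule S" by (rule S_amod)
  show "alin S (freemod (n + m)) II"
    unfolding alin_def II_def jd_def
    by (auto simp: L.i_fm algebra_simps)
  have pc: "(\<lambda>k. if k < n then v k else 0) \<in> mcarrier (freemod n)" for v :: "nat \<Rightarrow> 'a" by auto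
  show "alin (freemod (n + m)) S PP"
    unfolding alin_def PP_def
  proof (intro conjI ballI allI)
    fix x :: "nat \<Rightarrow> 'a" assume x: "x \<in> mcarrier (freemod (n + m))"
    show "(p (\<lambda>k. if k < n then x k else 0), qd (\<lambda>k. x (k + n))) \<in> mcarrier S"
      using L.p_cl[OF pc] qd_D by auto
  next
    fix x y :: "nat \<Rightarrow> 'a" assume x: "x \<in> mcarrier (freemod (n + m))" and y: "y \<in> mcarrier (freemod (n + m))"
    have "p (\<lambda>k. if k < n then x k + y k else 0) = madd L (p (\<lambda>k. if k < n then x k else 0)) (p (\<lambda>k. if k < n then y k else 0))"
      using L.p_add[OF pc pc] by (simp add: if_distrib cong: if_cong)
    then show "(p (\<lambda>k. if k < n then madd (freemod (n + m)) x y k else 0), qd (\<lambda>k. madd (freemod (n + m)) x y (k + n))) =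
         madd S (p (\<lambda>k. if k < n then x k else 0), qd (\<lambda>k. x (k + n))) (p (\<lambda>k. if k < n then y k else 0), qd (\<lambda>k. y (k + n)))"
      by (auto simp: qd_def fun_eq_iff sum.distrib algebra_simps cong: if_cong)
  next
    fix a and x :: "nat \<Rightarrow> 'a" assume x: "x \<in> mcarrier (freemod (n + m))"
    have "p (\<lambda>k. if k < n then a * x k else 0) = msmult L a (p (\<lambda>k. if k < n then x k else 0))"
      using L.p_sm[OF pc] by (simp add: if_distrib cong: if_cong)
    then show "(p (\<lambda>k. if k < n then msmult (freemod (n + m)) a x k else 0), qd (\<lambda>k. msmult (freemod (n + m)) a x (k + n))) =
         msmult S a (p (\<lambda>k. if k < n then x k else 0), qd (\<lambda>k. x (k + n)))"
      by (auto simp: qd_def fun_eq_iff sum_distrib_left algebra_simps cong: if_cong)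
  qed
  show "\<forall>x\<in>mcarrier S. PP (II x) = x"
  proof
    fix X assume "X \<in> mcarrier S"
    then obtain x \<phi> where X: "X = (x,\<phi>)" "x \<in> L.C" "\<phi> \<in> D" by auto
    have 1: "(\<lambda>k. if k < n then (if k < n then i x k else jd \<phi> (k - n)) else 0) = i x"
      using L.i_fm[OF X(2)] by (auto simp: fun_eq_iff)
    have 2: "qd (\<lambda>k. if k + n < n then i x (k + n) else jd \<phi> (k + n - n)) = \<phi>"
    proof (rule dual_ext[OF qd_D X(3)])
      fix \<zeta> assume z: "\<zeta> \<in> M.C"
      show "qd (\<lambda>k. if k + n < n then i x (k + n) else jd \<phi> (k + n - n)) \<zeta> = \<phi> \<zeta>"
        using M.dual_expand[OF X(3) z] z by (simp add: qd_def jd_def mult.commute)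
    qed
    show "PP (II X) = X" using X 1 2 L.pi by (simp add: PP_def II_def)
  qed
qed

end

context fmod begin
lemma sm_z[simp]: "msmult M a (mzero M) = mzero M" by (rule ext) auto
lemma dual_p:
  assumes "\<phi> \<in> mcarrier (dualmod M)" "v \<in> mcarrier (freemod n)"
  shows "\<phi> (p v) = (\<Sum>k<n. v k * \<phi> (p (ev k)))"
proof (rule free_lin[where G="\<lambda>v. \<phi> (p v)"])
  show "v \<in> mcarrier (freemod n)" by fact
next
  fix v w :: "nat \<Rightarrow> 'a" assume "v \<in> mcarrier (freemod n)" "w \<in> mcarrier (freemod n)"
  then show "\<phi> (p (\<lambda>k. v k + w k)) = \<phi> (p v) + \<phi> (p w)"
    using assms(1) p_add p_cl by simp
next
  fix v :: "nat \<Rightarrow> 'a" and a assume "v \<in> mcarrier (freemod n)"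
  then show "\<phi> (p (\<lambda>k. a * v k)) = a * \<phi> (p v)"
    using assms(1) p_sm p_cl by simp
qed
end

locale full = h1: lrm L1 n1 i1 p1 \<iota> L2 n2 i2 p2 act12 + h2: lrm L2 n2 i2 p2 \<iota> L1 n1 i1 p1 act21
  for L1 :: "('a::comm_ring_1,'l1) lr" and n1 i1 p1 and \<iota> :: "'r::comm_ring_1 \<Rightarrow> 'a"
  and L2 :: "('a,'l2) lr" and n2 i2 p2 and act12 act21
begin

abbreviation "C1 \<equiv> mcarrier L1"
abbreviation "C2 \<equiv> mcarrier L2"
abbreviation "LL \<equiv> semid L1 L2 act12"
abbreviation "DD \<equiv> semid L2 L1 act21"
definition "Phi \<alpha> = (\<lambda>z. if z \<in> mcarrier LL then natpair \<alpha> z else 0)"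

lemma np[simp]: "natpair (\<xi>,\<psi>) (x,\<phi>) = \<phi> \<xi> + \<psi> x" by (simp add: natpair_def)

lemma swap: "full L2 n2 i2 p2 \<iota> L1 n1 i1 p1 act21 act12"
  by (simp add: full_def h1.lrm_axioms h2.lrm_axioms)

lemma Phi_dual: "\<alpha> \<in> mcarrier DD \<Longrightarrow> Phi \<alpha> \<in> mcarrier (dualmod LL)"
  unfolding D_iff alin_def Phi_def
  by (auto simp: algebra_simps)

lemma Phi_alin: "alin DD (dualmod LL) Phi"
  unfolding alin_def
proof (intro conjI ballI allI)
  fix x assume "x \<in> mcarrier DD" then show "Phi x \<in> mcarrier (dualmod LL)" by (rule Phi_dual)
next
  fix x y assume "x \<in> mcarrier DD" "y \<in> mcarrier DD"
  then show "Phi (madd DD x y) = madd (dualmod LL) (Phi x) (Phi y)"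
    by (auto simp: Phi_def fun_eq_iff algebra_simps)
next
  fix a x assume "x \<in> mcarrier DD"
  then show "Phi (msmult DD a x) = msmult (dualmod LL) a (Phi x)"
    by (auto simp: Phi_def fun_eq_iff algebra_simps)
qed

lemma Phi_inj:
  assumes a: "\<alpha> \<in> mcarrier DD" and b: "\<beta> \<in> mcarrier DD"
    and eq: "\<And>z. z \<in> mcarrier LL \<Longrightarrow> natpair \<alpha> z = natpair \<beta> z"
  shows "\<alpha> = \<beta>"
proof -
  obtain \<xi> \<psi> where A: "\<alpha> = (\<xi>,\<psi>)" "\<xi> \<in> C2" "\<psi> \<in> h2.D" using a by auto
  obtain \<eta> \<chi> where B: "\<beta> = (\<eta>,\<chi>)" "\<eta> \<in> C2" "\<chi> \<in> h2.D" using b by auto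
  have 1: "\<psi> = \<chi>"
  proof (rule h2.dual_ext[OF A(3) B(3)])
    fix x assume "x \<in> C1"
    then show "\<psi> x = \<chi> x" using eq[of "(x, \<lambda>_. 0)"] A B by simp
  qed
  have 2: "\<xi> = \<eta>"
  proof (rule h1.M.sep[OF A(2) B(2)])
    fix \<phi> assume "\<phi> \<in> h1.D"
    then show "\<phi> \<xi> = \<phi> \<eta>" using eq[of "(mzero L1, \<phi>)"] A B 1 by simp
  qed
  show ?thesis using A B 1 2 by simp
qed

lemma Phi_surj:
  assumes F: "F \<in> mcarrier (dualmod LL)"
  shows "\<exists>\<alpha>\<in>mcarrier DD. Phi \<alpha> = F"
proof -
  have FF: "alin LL selfmod F \<and> (\<forall>z. z \<notin> mcarrier LL \<longrightarrow> F z = 0)" using F D_iff[of F LL] by blast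
  have Fl: "alin LL selfmod F" and Fo: "\<And>z. z \<notin> mcarrier LL \<Longrightarrow> F z = 0" using FF by auto
  have Fadd: "F (madd LL u v) = F u + F v" if "u \<in> mcarrier LL" "v \<in> mcarrier LL" for u v
    using Fl that unfolding alin_def by auto
  have Fsm: "F (msmult LL a u) = a * F u" if "u \<in> mcarrier LL" for u a
    using Fl that unfolding alin_def by auto
  define \<psi> where "\<psi> = (\<lambda>x. if x \<in> C1 then F (x, \<lambda>_. 0) else 0)"
  have \<psi>D: "\<psi> \<in> h2.D"
    unfolding D_iff alin_def
  proof (intro conjI ballI allI)
    fix x y assume xy: "x \<in> C1" "y \<in> C1"
    have "F (madd LL (x, \<lambda>_. 0) (y, \<lambda>_. 0)) = F (x, \<lambda>_. 0) + F (y, \<lambda>_. 0)" using xy by (intro Fadd) auto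
    then show "\<psi> (madd L1 x y) = madd selfmod (\<psi> x) (\<psi> y)" using xy by (simp add: \<psi>_def)
  next
    fix a x assume x: "x \<in> C1"
    have "F (msmult LL a (x, \<lambda>_. 0)) = a * F (x, \<lambda>_. 0)" using x by (intro Fsm) auto
    then show "\<psi> (msmult L1 a x) = msmult selfmod a (\<psi> x)" using x by (simp add: \<psi>_def)
  qed (auto simp: \<psi>_def)
  define v where "v = (\<lambda>k. if k < n2 then F (mzero L1, h1.M.cf k) else 0)"
  have vF: "v \<in> mcarrier (freemod n2)" by (auto simp: v_def)
  define \<xi> where "\<xi> = p2 v"
  have \<xi>C: "\<xi> \<in> C2" using h1.M.p_cl[OF vF] by (simp add: \<xi>_def)
  have sumD: "(\<lambda>\<zeta>. \<Sum>k<N. c k * g k \<zeta>) \<in> h1.D \<and> F (mzero L1, \<lambda>\<zeta>. \<Sum>k<N. c k * g k \<zeta>) = (\<Sum>k<N. c k * F (mzero L1, g k))"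
    if g: "\<And>k. g k \<in> h1.D" for g c and N :: nat
  proof (induction N)
    case 0
    have "F (msmult LL 0 (mzero L1, \<lambda>_. 0)) = 0 * F (mzero L1, \<lambda>_. 0)" by (intro Fsm) auto
    then show ?case by simp
  next
    case (Suc N)
    have gs: "(\<lambda>\<zeta>. c N * g N \<zeta>) \<in> h1.D" using g by auto
    have "F (madd LL (mzero L1, \<lambda>\<zeta>. \<Sum>k<N. c k * g k \<zeta>) (mzero L1, \<lambda>\<zeta>. c N * g N \<zeta>))
       = F (mzero L1, \<lambda>\<zeta>. \<Sum>k<N. c k * g k \<zeta>) + F (mzero L1, \<lambda>\<zeta>. c N * g N \<zeta>)"
      using Suc gs by (intro Fadd) auto
    moreover have "F (msmult LL (c N) (mzero L1, g N)) = c N * F (mzero L1, g N)" using g by (intro Fsm) auto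
    ultimately show ?case using Suc gs by simp
  qed
  have key: "F (mzero L1, \<phi>) = \<phi> \<xi>" if \<phi>: "\<phi> \<in> h1.D" for \<phi>
  proof -
    have "\<phi> \<xi> = (\<Sum>k<n2. v k * \<phi> (p2 (h1.M.ev k)))" unfolding \<xi>_def by (rule h1.M.dual_p[OF \<phi> vF])
    also have "\<dots> = (\<Sum>k<n2. \<phi> (p2 (h1.M.ev k)) * F (mzero L1, h1.M.cf k))"
      by (simp add: v_def mult.commute)
    also have "\<dots> = F (mzero L1, \<lambda>\<zeta>. \<Sum>k<n2. \<phi> (p2 (h1.M.ev k)) * h1.M.cf k \<zeta>)"
      using sumD[of h1.M.cf "\<lambda>k. \<phi> (p2 (h1.M.ev k))" n2] h1.M.cf_dual by simp
    also have "(\<lambda>\<zeta>. \<Sum>k<n2. \<phi> (p2 (h1.M.ev k)) * h1.M.cf k \<zeta>) = \<phi>"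
    proof
      fix \<zeta> show "(\<Sum>k<n2. \<phi> (p2 (h1.M.ev k)) * h1.M.cf k \<zeta>) = \<phi> \<zeta>"
        using h1.M.dual_expand[OF \<phi>, of \<zeta>] \<phi>
        by (cases "\<zeta> \<in> C2") (auto simp: h1.M.cf_def mult.commute)
    qed
    finally show ?thesis by simp
  qed
  have "Phi (\<xi>, \<psi>) = F"
  proof
    fix z show "Phi (\<xi>, \<psi>) z = F z"
    proof (cases "z \<in> mcarrier LL")
      case True
      then obtain x \<phi> where z: "z = (x,\<phi>)" "x \<in> C1" "\<phi> \<in> h1.D" by auto
      have "F (madd LL (x, \<lambda>_. 0) (mzero L1, \<phi>)) = F (x, \<lambda>_. 0) + F (mzero L1, \<phi>)"
        using z by (intro Fadd) auto
      then show ?thesis using z key[OF z(3)] by (simp add: Phi_def \<psi>_def add.commute)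
    next
      case False then show ?thesis by (simp add: Phi_def Fo)
    qed
  qed
  then show ?thesis using \<xi>C \<psi>D by auto
qed

lemma Phi_bij: "bij_betw Phi (mcarrier DD) (mcarrier (dualmod LL))"
  unfolding bij_betw_def
proof (intro conjI)
  show "inj_on Phi (mcarrier DD)"
  proof (rule inj_onI)
    fix a b assume ab: "a \<in> mcarrier DD" "b \<in> mcarrier DD" "Phi a = Phi b"
    show "a = b"
    proof (rule Phi_inj[OF ab(1,2)])
      fix z assume "z \<in> mcarrier LL" then show "natpair a z = natpair b z"
        using fun_cong[OF ab(3), of z] by (simp add: Phi_def)
    qed
  qed
  show "Phi ` mcarrier DD = mcarrier (dualmod LL)"
    using Phi_dual Phi_surj by blast
qed

end

context lra begin
lemma br_subR[simp]: "x \<in> C \<Longrightarrow> y \<in> C \<Longrightarrow> z \<in> C \<Longrightarrow> br x (msub L y z) = msub L (br x y) (br x z)"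
  by (rule ext) (auto simp: msub_def)
lemma br_subL[simp]: "x \<in> C \<Longrightarrow> y \<in> C \<Longrightarrow> z \<in> C \<Longrightarrow> br (msub L y z) x = msub L (br y x) (br z x)"
  by (rule ext) (auto simp: msub_def i_br_anti[of _ x])
lemma br_smL[simp]: "x \<in> C \<Longrightarrow> y \<in> C \<Longrightarrow> br (msmult L a x) y = msub L (msmult L a (br x y)) (msmult L (an y a) x)"
  by (rule ext) (auto simp: msub_def)
end


context full begin

abbreviation "br1 \<equiv> lbr L1"
abbreviation "br2 \<equiv> lbr L2"
abbreviation "an1 \<equiv> anc L1"
abbreviation "an2 \<equiv> anc L2"

definition Def1 :: "'l1 \<Rightarrow> 'l1 \<Rightarrow> 'l2 \<Rightarrow> 'l1" where
  "Def1 x y \<xi> = msub L1 (madd L1 (msub L1 (madd L1 (act21 \<xi> (br1 x y)) (br1 y (act21 \<xi> x))) (br1 x (act21 \<xi> y)))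
      (act21 (act12 x \<xi>) y)) (act21 (act12 y \<xi>) x)"
definition Dl :: "'l1 \<Rightarrow> 'l2 \<Rightarrow> 'a \<Rightarrow> 'a" where
  "Dl y \<xi> c = an1 (act21 \<xi> y) c - an2 (act12 y \<xi>) c - an2 \<xi> (an1 y c) + an1 y (an2 \<xi> c)"
definition "MP1 \<longleftrightarrow> (\<forall>x\<in>C1. \<forall>y\<in>C1. \<forall>\<xi>\<in>C2. Def1 x y \<xi> = mzero L1)"
definition "ANC \<longleftrightarrow> (\<forall>y\<in>C1. \<forall>\<xi>\<in>C2. \<forall>c. Dl y \<xi> c = 0)"

lemma Def1_cl[simp]: "x \<in> C1 \<Longrightarrow> y \<in> C1 \<Longrightarrow> \<xi> \<in> C2 \<Longrightarrow> Def1 x y \<xi> \<in> C1"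
  by (simp add: Def1_def)

abbreviation "T \<equiv> twsum L1 L2 act12 act21"

lemma T_simps[simp]:
  "mcarrier T = C1 \<times> C2"
  "madd T = (\<lambda>(x,\<xi>) (y,\<eta>). (madd L1 x y, madd L2 \<xi> \<eta>))"
  "mzero T = (mzero L1, mzero L2)"
  "msmult T = (\<lambda>a (x,\<xi>). (msmult L1 a x, msmult L2 a \<xi>))"
  "lbr T = (\<lambda>(x,\<xi>) (y,\<eta>).
        (msub L1 (madd L1 (lbr L1 x y) (act21 \<xi> y)) (act21 \<eta> x),
         msub L2 (madd L2 (lbr L2 \<xi> \<eta>) (act12 x \<eta>)) (act12 y \<xi>)))"
  "anc T = (\<lambda>(x,\<xi>) a. anc L1 x a + anc L2 \<xi> a)"
  by (simp_all add: twsum_def)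

lemma J1:
  assumes "x \<in> C1" "y \<in> C1" "z \<in> C1" "\<xi> \<in> C2" "\<eta> \<in> C2" "\<zeta> \<in> C2"
  shows "i1 (fst (madd T (madd T (lbr T (x,\<xi>) (lbr T (y,\<eta>) (z,\<zeta>))) (lbr T (y,\<eta>) (lbr T (z,\<zeta>) (x,\<xi>)))) (lbr T (z,\<zeta>) (lbr T (x,\<xi>) (y,\<eta>))))) k
    = i1 (br1 x (br1 y z)) k + i1 (br1 y (br1 z x)) k + i1 (br1 z (br1 x y)) k
      + i1 (Def1 x y \<zeta>) k + i1 (Def1 z x \<eta>) k + i1 (Def1 y z \<xi>) k"
  using assms by (simp add: Def1_def h1.L.i_br_anti[of _ x] algebra_simps)


end

sublocale full \<subseteq> sw: full L2 n2 i2 p2 \<iota> L1 n1 i1 p1 act21 act12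
  by (rule swap)

context full begin

lemma J2:
  assumes "x \<in> C1" "y \<in> C1" "z \<in> C1" "\<xi> \<in> C2" "\<eta> \<in> C2" "\<zeta> \<in> C2"
  shows "i2 (snd (madd T (madd T (lbr T (x,\<xi>) (lbr T (y,\<eta>) (z,\<zeta>))) (lbr T (y,\<eta>) (lbr T (z,\<zeta>) (x,\<xi>)))) (lbr T (z,\<zeta>) (lbr T (x,\<xi>) (y,\<eta>))))) k
    = i2 (br2 \<xi> (br2 \<eta> \<zeta>)) k + i2 (br2 \<eta> (br2 \<zeta> \<xi>)) k + i2 (br2 \<zeta> (br2 \<xi> \<eta>)) k
      + i2 (sw.Def1 \<xi> \<eta> z) k + i2 (sw.Def1 \<zeta> \<xi> y) k + i2 (sw.Def1 \<eta> \<zeta> x) k"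
  using assms by (simp add: sw.Def1_def h2.L.i_br_anti[of _ \<xi>] algebra_simps)

lemma Dl_solve: "Dl y \<xi> b = 0 \<Longrightarrow> an1 (act21 \<xi> y) b = an2 (act12 y \<xi>) b + an2 \<xi> (an1 y b) - an1 y (an2 \<xi> b)"
proof -
  assume "Dl y \<xi> b = 0"
  moreover have "an1 (act21 \<xi> y) b - (an2 (act12 y \<xi>) b + an2 \<xi> (an1 y b) - an1 y (an2 \<xi> b)) = Dl y \<xi> b"
    by (simp add: Dl_def algebra_simps)
  ultimately show ?thesis by (metis eq_iff_diff_eq_0)
qed

lemma T_amod: "amodule T"
proof -
  have inv: "\<exists>y\<in>mcarrier T. madd T x y = mzero T" if xS: "x \<in> mcarrier T" for x
  proof -
    obtain u \<phi> where x: "x = (u,\<phi>)" "u \<in> C1" "\<phi> \<in> C2" using xS by auto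
    obtain v where v: "v \<in> C1" "madd L1 u v = mzero L1" using h1.L.am_inv x by blast
    obtain w where w: "w \<in> C2" "madd L2 \<phi> w = mzero L2" using h1.M.am_inv x by blast
    show ?thesis using x v w by (intro bexI[of _ "(v, w)"]) auto
  qed
  show ?thesis unfolding amodule_def
    using h1.L.am h1.M.am inv unfolding amodule_def by (auto simp: algebra_simps)
qed

lemma T_lr_iff: "lr_alg \<iota> T \<longleftrightarrow> MP1 \<and> sw.MP1 \<and> ANC"
proof
  assume lr: "lr_alg \<iota> T"
  have jac: "madd T (madd T (lbr T u (lbr T v w)) (lbr T v (lbr T w u))) (lbr T w (lbr T u v)) = mzero T"
    if "u \<in> mcarrier T" "v \<in> mcarrier T" "w \<in> mcarrier T" for u v w
    using lr that unfolding lr_alg_def by blast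
  have anc: "anc T (lbr T u v) b = anc T u (anc T v b) - anc T v (anc T u b)"
    if "u \<in> mcarrier T" "v \<in> mcarrier T" for u v b
    using lr that unfolding lr_alg_def by blast
  show "MP1 \<and> sw.MP1 \<and> ANC"
  proof (intro conjI)
    show "MP1" unfolding MP1_def
    proof (intro ballI)
      fix x y \<xi> assume a: "x \<in> C1" "y \<in> C1" "\<xi> \<in> C2"
      show "Def1 x y \<xi> = mzero L1"
      proof (rule h1.L.ext)
        fix k
        let ?J = "madd T (madd T (lbr T (x, mzero L2) (lbr T (y, mzero L2) (mzero L1, \<xi>))) (lbr T (y, mzero L2) (lbr T (mzero L1, \<xi>) (x, mzero L2)))) (lbr T (mzero L1, \<xi>) (lbr T (x, mzero L2) (y, mzero L2)))"
        have j: "?J = mzero T" by (rule jac) (use a in auto)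
        have e1: "i1 (fst ?J) k = i1 (Def1 x y \<xi>) k"
          using J1[of x y "mzero L1" "mzero L2" "mzero L2" \<xi> k] a by (simp add: Def1_def)
        have e2: "i1 (fst ?J) k = 0" by (simp only: j) simp
        have "i1 (Def1 x y \<xi>) k = 0" using e1 e2 by simp
        then show "i1 (Def1 x y \<xi>) k = i1 (mzero L1) k" by simp
      qed (use a in auto)
    qed
    show "sw.MP1" unfolding sw.MP1_def
    proof (intro ballI)
      fix x y \<xi> assume a: "x \<in> C2" "y \<in> C2" "\<xi> \<in> C1"
      show "sw.Def1 x y \<xi> = mzero L2"
      proof (rule h1.M.ext)
        fix k
        let ?J = "madd T (madd T (lbr T (mzero L1, x) (lbr T (mzero L1, y) (\<xi>, mzero L2))) (lbr T (mzero L1, y) (lbr T (\<xi>, mzero L2) (mzero L1, x)))) (lbr T (\<xi>, mzero L2) (lbr T (mzero L1, x) (mzero L1, y)))"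
        have j: "?J = mzero T" by (rule jac) (use a in auto)
        have e1: "i2 (snd ?J) k = i2 (sw.Def1 x y \<xi>) k"
          using J2[of "mzero L1" "mzero L1" \<xi> x y "mzero L2" k] a by (simp add: sw.Def1_def)
        have e2: "i2 (snd ?J) k = 0" by (simp only: j) simp
        have "i2 (sw.Def1 x y \<xi>) k = 0" using e1 e2 by simp
        then show "i2 (sw.Def1 x y \<xi>) k = i2 (mzero L2) k" by simp
      qed (use a in auto)
    qed
    show "ANC" unfolding ANC_def
    proof (intro ballI allI)
      fix y \<xi> c assume a: "y \<in> C1" "\<xi> \<in> C2"
      show "Dl y \<xi> c = 0"
        using anc[of "(y, mzero L2)" "(mzero L1, \<xi>)" c] a by (simp add: Dl_def msub_def algebra_simps)
    qed
  qed
next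
  assume "MP1 \<and> sw.MP1 \<and> ANC"
  then have M1: "\<And>x y \<xi>. x \<in> C1 \<Longrightarrow> y \<in> C1 \<Longrightarrow> \<xi> \<in> C2 \<Longrightarrow> i1 (Def1 x y \<xi>) k = 0"
    and M2: "\<And>x y \<xi>. x \<in> C2 \<Longrightarrow> y \<in> C2 \<Longrightarrow> \<xi> \<in> C1 \<Longrightarrow> i2 (sw.Def1 x y \<xi>) k = 0"
    and A: "\<And>y \<xi> c. y \<in> C1 \<Longrightarrow> \<xi> \<in> C2 \<Longrightarrow> Dl y \<xi> c = 0"
    for k unfolding MP1_def sw.MP1_def ANC_def by auto
  show "lr_alg \<iota> T"
    unfolding lr_alg_def
  proof (intro conjI)
    show "amodule T" by (rule T_amod)
    show "\<forall>x\<in>mcarrier T. \<forall>y\<in>mcarrier T. lbr T x y \<in> mcarrier T" by auto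
    show "\<forall>x\<in>mcarrier T. \<forall>y\<in>mcarrier T. \<forall>z\<in>mcarrier T.
       lbr T (madd T x y) z = madd T (lbr T x z) (lbr T y z) \<and> lbr T z (madd T x y) = madd T (lbr T z x) (lbr T z y)"
      by (auto intro!: h1.L.ext h1.M.ext simp: algebra_simps)
    show "\<forall>r. \<forall>x\<in>mcarrier T. \<forall>y\<in>mcarrier T.
       lbr T (msmult T (\<iota> r) x) y = msmult T (\<iota> r) (lbr T x y) \<and> lbr T x (msmult T (\<iota> r) y) = msmult T (\<iota> r) (lbr T x y)"
      by (auto intro!: h1.L.ext h1.M.ext simp: algebra_simps)
    show "\<forall>x\<in>mcarrier T. lbr T x x = mzero T"
      by (auto intro!: h1.L.ext h1.M.ext simp: h1.L.br_alt h2.L.br_alt)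
    show "\<forall>x\<in>mcarrier T. \<forall>y\<in>mcarrier T. \<forall>z\<in>mcarrier T.
       madd T (madd T (lbr T x (lbr T y z)) (lbr T y (lbr T z x))) (lbr T z (lbr T x y)) = mzero T"
    proof (intro ballI)
      fix u v w assume "u \<in> mcarrier T" "v \<in> mcarrier T" "w \<in> mcarrier T"
      then obtain x \<xi> y \<eta> z \<zeta> where uvw: "u = (x,\<xi>)" "v = (y,\<eta>)" "w = (z,\<zeta>)"
        and c: "x \<in> C1" "y \<in> C1" "z \<in> C1" "\<xi> \<in> C2" "\<eta> \<in> C2" "\<zeta> \<in> C2" by auto
      let ?J = "madd T (madd T (lbr T u (lbr T v w)) (lbr T v (lbr T w u))) (lbr T w (lbr T u v))"
      have cl: "?J \<in> mcarrier T" using c uvw by simp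
      have f: "fst ?J = mzero L1"
        by (rule h1.L.ext) (use cl J1[OF c] M1 c h1.L.i_jac uvw in \<open>auto simp: mem_Times_iff\<close>)
      have s: "snd ?J = mzero L2"
        by (rule h1.M.ext) (use cl J2[OF c] M2 c h2.L.i_jac uvw in \<open>auto simp: mem_Times_iff\<close>)
      show "?J = mzero T" using f s by (simp add: prod_eq_iff)
    qed
    show "\<forall>x\<in>mcarrier T. is_der \<iota> (anc T x)"
      by (auto simp: is_der_def algebra_simps)
    show "\<forall>x\<in>mcarrier T. \<forall>y\<in>mcarrier T. \<forall>b. anc T (madd T x y) b = anc T x b + anc T y b"
      by auto
    show "\<forall>a. \<forall>x\<in>mcarrier T. \<forall>b. anc T (msmult T a x) b = a * anc T x b"
      by (auto simp: algebra_simps)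
    show "\<forall>x\<in>mcarrier T. \<forall>y\<in>mcarrier T. \<forall>b. anc T (lbr T x y) b = anc T x (anc T y b) - anc T y (anc T x b)"
    proof (intro ballI allI)
      fix u v b assume "u \<in> mcarrier T" "v \<in> mcarrier T"
      then obtain x \<xi> y \<eta> where uv: "u = (x,\<xi>)" "v = (y,\<eta>)" and c: "x \<in> C1" "y \<in> C1" "\<xi> \<in> C2" "\<eta> \<in> C2" by auto
      have a1: "Dl y \<xi> b = 0" "Dl x \<eta> b = 0" using A c by auto
      have g: "anc T (lbr T u v) b - (anc T u (anc T v b) - anc T v (anc T u b)) = Dl y \<xi> b - Dl x \<eta> b"
        using c uv by (simp add: msub_def Dl_def algebra_simps)
      show "anc T (lbr T u v) b = anc T u (anc T v b) - anc T v (anc T u b)"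
        using g a1 by (metis diff_self eq_iff_diff_eq_0)
    qed
    show "\<forall>a. \<forall>x\<in>mcarrier T. \<forall>y\<in>mcarrier T.
       lbr T x (msmult T a y) = madd T (msmult T (anc T x a) y) (msmult T a (lbr T x y))"
      by (auto intro!: h1.L.ext h1.M.ext simp: algebra_simps)
  qed
qed

end

context full begin

lemma Def1_scale:
  assumes "x \<in> C1" "y \<in> C1" "\<xi> \<in> C2"
  shows "i1 (Def1 (msmult L1 c x) y \<xi>) k = c * i1 (Def1 x y \<xi>) k + Dl y \<xi> c * i1 x k"
  using assms by (simp add: Def1_def Dl_def h1.L.i_br_anti[of y x] algebra_simps)

lemma Dl_add: "u \<in> C1 \<Longrightarrow> v \<in> C1 \<Longrightarrow> \<xi> \<in> C2 \<Longrightarrow> Dl (madd L1 u v) \<xi> c = Dl u \<xi> c + Dl v \<xi> c"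
  by (simp add: Dl_def algebra_simps)
lemma Dl_sm: "u \<in> C1 \<Longrightarrow> \<xi> \<in> C2 \<Longrightarrow> Dl (msmult L1 a u) \<xi> c = a * Dl u \<xi> c"
  by (simp add: Dl_def algebra_simps)

lemma MP1_ANC: "MP1 \<Longrightarrow> ANC"
  unfolding ANC_def
proof (intro ballI allI)
  fix y \<xi> c assume M: MP1 and y: "y \<in> C1" and \<xi>: "\<xi> \<in> C2"
  have kill: "Dl u \<xi> c * i1 x k = 0" if "u \<in> C1" "x \<in> C1" for u x k
  proof -
    have "Def1 (msmult L1 c x) u \<xi> = mzero L1" "Def1 x u \<xi> = mzero L1" using M that \<xi> unfolding MP1_def by auto
    then show ?thesis using Def1_scale[OF that(2) that(1) \<xi>, of c k] by simp
  qed
  have "Dl (p1 (i1 y)) \<xi> c = (\<Sum>k<n1. i1 y k * Dl (p1 (h1.L.ev k)) \<xi> c)"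
  proof (rule h1.L.free_lin[where G="\<lambda>v. Dl (p1 v) \<xi> c"])
    show "i1 y \<in> mcarrier (freemod n1)" using h1.L.i_fm[OF y] by auto
  next
    fix v w :: "nat \<Rightarrow> 'a" assume "v \<in> mcarrier (freemod n1)" "w \<in> mcarrier (freemod n1)"
    then show "Dl (p1 (\<lambda>k. v k + w k)) \<xi> c = Dl (p1 v) \<xi> c + Dl (p1 w) \<xi> c"
      using h1.L.p_add h1.L.p_cl Dl_add \<xi> by simp
  next
    fix v :: "nat \<Rightarrow> 'a" and a assume "v \<in> mcarrier (freemod n1)"
    then show "Dl (p1 (\<lambda>k. a * v k)) \<xi> c = a * Dl (p1 v) \<xi> c"
      using h1.L.p_sm h1.L.p_cl Dl_sm \<xi> by simp
  qed
  also have "\<dots> = 0"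
  proof (rule sum.neutral, rule ballI)
    fix k assume "k \<in> {..<n1}"
    then have "h1.L.ev k \<in> mcarrier (freemod n1)" by (intro h1.L.ev_cl) simp
    then have "p1 (h1.L.ev k) \<in> C1" by (rule h1.L.p_cl)
    then show "i1 y k * Dl (p1 (h1.L.ev k)) \<xi> c = 0" using kill[of "p1 (h1.L.ev k)" y k] y by (simp add: mult.commute)
  qed
  finally show "Dl y \<xi> c = 0" using h1.L.pi y by simp
qed

end

context lra begin
lemma br_swap: "x \<in> C \<Longrightarrow> y \<in> C \<Longrightarrow> br y x = msmult L (-1) (br x y)"
  by (rule ext) (auto simp: i_br_anti[of x y])
end

context full begin

definition dsx :: "('l1 \<times> ('l2 \<Rightarrow> 'a)) \<Rightarrow> ('l2 \<times> ('l1 \<Rightarrow> 'a)) \<Rightarrow> ('l2 \<times> ('l1 \<Rightarrow> 'a)) \<Rightarrow> 'a" where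
  "dsx X \<alpha> \<beta> = (case X of (x,\<phi>) \<Rightarrow> case \<alpha> of (\<xi>,\<psi>) \<Rightarrow> case \<beta> of (\<eta>,\<chi>) \<Rightarrow>
     an2 \<xi> (\<phi> \<eta>) - an2 \<eta> (\<phi> \<xi>) - \<phi> (br2 \<xi> \<eta>) + \<chi> (act21 \<xi> x) - \<psi> (act21 \<eta> x))"

lemma dsx_simp[simp]: "dsx (x,\<phi>) (\<xi>,\<psi>) (\<eta>,\<chi>) = an2 \<xi> (\<phi> \<eta>) - an2 \<eta> (\<phi> \<xi>) - \<phi> (br2 \<xi> \<eta>) + \<chi> (act21 \<xi> x) - \<psi> (act21 \<eta> x)"
  by (simp add: dsx_def)

lemma dstar_eq:
  assumes "X \<in> mcarrier LL" "\<alpha> \<in> mcarrier DD" "\<beta> \<in> mcarrier DD"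
  shows "dstar DD natpair X \<alpha> \<beta> = dsx X \<alpha> \<beta>"
  using assms by (auto simp: dstar_def algebra_simps)

definition cpsi :: "'l1 \<Rightarrow> ('l2 \<Rightarrow> 'a) \<Rightarrow> 'l2 \<Rightarrow> ('l1 \<Rightarrow> 'a) \<Rightarrow> 'l1 \<Rightarrow> 'a" where
  "cpsi x \<phi> \<xi> \<psi> = (\<lambda>y. if y \<in> C1 then an1 x (\<psi> y) - \<psi> (br1 x y) + an1 y (\<phi> \<xi>) - \<phi> (act12 y \<xi>) else 0)"

lemma cpsi_in[simp]: "y \<in> C1 \<Longrightarrow> cpsi x \<phi> \<xi> \<psi> y = an1 x (\<psi> y) - \<psi> (br1 x y) + an1 y (\<phi> \<xi>) - \<phi> (act12 y \<xi>)"
  by (simp add: cpsi_def)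

lemma cpsi_D[simp]: "x \<in> C1 \<Longrightarrow> \<phi> \<in> h1.D \<Longrightarrow> \<xi> \<in> C2 \<Longrightarrow> \<psi> \<in> h2.D \<Longrightarrow> cpsi x \<phi> \<xi> \<psi> \<in> h2.D"
  unfolding D_iff alin_def cpsi_def
  by (auto simp: algebra_simps)

lemma coad_eq:
  assumes X: "X = (x,\<phi>)" "x \<in> C1" "\<phi> \<in> h1.D" and A: "\<alpha> = (\<xi>,\<psi>)" "\<xi> \<in> C2" "\<psi> \<in> h2.D"
  shows "coad LL DD natpair X \<alpha> = (act12 x \<xi>, cpsi x \<phi> \<xi> \<psi>)"
  unfolding coad_def
proof (rule the_equality)
  show "(act12 x \<xi>, cpsi x \<phi> \<xi> \<psi>) \<in> mcarrier DD \<and>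
    (\<forall>z\<in>mcarrier LL. natpair (act12 x \<xi>, cpsi x \<phi> \<xi> \<psi>) z = anc LL X (natpair \<alpha> z) - natpair \<alpha> (lbr LL X z))"
    using X A by (auto simp: algebra_simps)
next
  fix \<gamma> assume g: "\<gamma> \<in> mcarrier DD \<and> (\<forall>z\<in>mcarrier LL. natpair \<gamma> z = anc LL X (natpair \<alpha> z) - natpair \<alpha> (lbr LL X z))"
  have c: "(act12 x \<xi>, cpsi x \<phi> \<xi> \<psi>) \<in> mcarrier DD" using X A by auto
  have e: "\<forall>z\<in>mcarrier LL. natpair (act12 x \<xi>, cpsi x \<phi> \<xi> \<psi>) z = anc LL X (natpair \<alpha> z) - natpair \<alpha> (lbr LL X z)"
    using X A by (auto simp: algebra_simps)
  show "\<gamma> = (act12 x \<xi>, cpsi x \<phi> \<xi> \<psi>)"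
    by (rule Phi_inj) (use g c e in auto)
qed


lemma cond_expand:
  assumes c: "x \<in> C1" "\<phi> \<in> h1.D" "y \<in> C1" "\<phi>' \<in> h1.D" "\<xi> \<in> C2" "\<psi> \<in> h2.D" "\<eta> \<in> C2" "\<chi> \<in> h2.D"
  shows "dstar DD natpair (lbr LL (x,\<phi>) (y,\<phi>')) (\<xi>,\<psi>) (\<eta>,\<chi>)
     - (gbr21 LL DD natpair (dstar DD natpair (x,\<phi>)) (y,\<phi>') (\<xi>,\<psi>) (\<eta>,\<chi>)
        + gbr12 LL DD natpair (x,\<phi>) (dstar DD natpair (y,\<phi>')) (\<xi>,\<psi>) (\<eta>,\<chi>))
   = - \<psi> (Def1 x y \<eta>) + \<chi> (Def1 x y \<xi>) + Dl y \<xi> (\<phi> \<eta>) - Dl y \<eta> (\<phi> \<xi>) - \<phi> (sw.Def1 \<xi> \<eta> y)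
     - Dl x \<xi> (\<phi>' \<eta>) + Dl x \<eta> (\<phi>' \<xi>) + \<phi>' (sw.Def1 \<xi> \<eta> x)"
proof -
  have c1: "coad LL DD natpair (x,\<phi>) (\<xi>,\<psi>) = (act12 x \<xi>, cpsi x \<phi> \<xi> \<psi>)" by (rule coad_eq) (use c in auto)
  have c2: "coad LL DD natpair (x,\<phi>) (\<eta>,\<chi>) = (act12 x \<eta>, cpsi x \<phi> \<eta> \<chi>)" by (rule coad_eq) (use c in auto)
  have c3: "coad LL DD natpair (y,\<phi>') (\<xi>,\<psi>) = (act12 y \<xi>, cpsi y \<phi>' \<xi> \<psi>)" by (rule coad_eq) (use c in auto)
  have c4: "coad LL DD natpair (y,\<phi>') (\<eta>,\<chi>) = (act12 y \<eta>, cpsi y \<phi>' \<eta> \<chi>)" by (rule coad_eq) (use c in auto)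
  show ?thesis
    using c by (simp add: gbr21_def gbr12_def c1 c2 c3 c4 dstar_eq Def1_def sw.Def1_def Dl_def algebra_simps
      h2.L.br_swap[of "act12 y \<xi>" \<eta>] h2.L.br_swap[of "act12 x \<xi>" \<eta>])
qed

end

context full begin

definition "COND \<longleftrightarrow> (\<forall>X\<in>mcarrier LL. \<forall>Y\<in>mcarrier LL. \<forall>\<alpha>\<in>mcarrier DD. \<forall>\<beta>\<in>mcarrier DD.
        dstar DD natpair (lbr LL X Y) \<alpha> \<beta> =
          gbr21 LL DD natpair (dstar DD natpair X) Y \<alpha> \<beta> + gbr12 LL DD natpair X (dstar DD natpair Y) \<alpha> \<beta>)"

lemma Dl_zero[simp]: "y \<in> C1 \<Longrightarrow> \<xi> \<in> C2 \<Longrightarrow> Dl y \<xi> 0 = 0"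
  by (simp add: Dl_def)

lemma COND_iff: "COND \<longleftrightarrow> MP1 \<and> sw.MP1 \<and> ANC"
proof
  assume C: COND
  have ce: "- \<psi> (Def1 x y \<eta>) + \<chi> (Def1 x y \<xi>) + Dl y \<xi> (\<phi> \<eta>) - Dl y \<eta> (\<phi> \<xi>) - \<phi> (sw.Def1 \<xi> \<eta> y)
     - Dl x \<xi> (\<phi>' \<eta>) + Dl x \<eta> (\<phi>' \<xi>) + \<phi>' (sw.Def1 \<xi> \<eta> x) = 0"
    if c: "x \<in> C1" "\<phi> \<in> h1.D" "y \<in> C1" "\<phi>' \<in> h1.D" "\<xi> \<in> C2" "\<psi> \<in> h2.D" "\<eta> \<in> C2" "\<chi> \<in> h2.D"
    for x \<phi> y \<phi>' \<xi> \<psi> \<eta> \<chi>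
  proof -
    have "dstar DD natpair (lbr LL (x,\<phi>) (y,\<phi>')) (\<xi>,\<psi>) (\<eta>,\<chi>)
     = gbr21 LL DD natpair (dstar DD natpair (x,\<phi>)) (y,\<phi>') (\<xi>,\<psi>) (\<eta>,\<chi>)
        + gbr12 LL DD natpair (x,\<phi>) (dstar DD natpair (y,\<phi>')) (\<xi>,\<psi>) (\<eta>,\<chi>)"
    proof -
      have m: "(x,\<phi>) \<in> mcarrier LL" "(y,\<phi>') \<in> mcarrier LL" "(\<xi>,\<psi>) \<in> mcarrier DD" "(\<eta>,\<chi>) \<in> mcarrier DD"
        using c by auto
      show ?thesis using C m unfolding COND_def by blast
    qed
    then have h: "dstar DD natpair (lbr LL (x,\<phi>) (y,\<phi>')) (\<xi>,\<psi>) (\<eta>,\<chi>)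
     - (gbr21 LL DD natpair (dstar DD natpair (x,\<phi>)) (y,\<phi>') (\<xi>,\<psi>) (\<eta>,\<chi>)
        + gbr12 LL DD natpair (x,\<phi>) (dstar DD natpair (y,\<phi>')) (\<xi>,\<psi>) (\<eta>,\<chi>)) = 0"
      by (simp only: right_minus_eq)
    show ?thesis by (rule trans[OF sym[OF cond_expand[OF c]] h])
  qed
  have M1: MP1 unfolding MP1_def
  proof (intro ballI)
    fix x y \<eta> assume a: "x \<in> C1" "y \<in> C1" "\<eta> \<in> C2"
    show "Def1 x y \<eta> = mzero L1"
    proof (rule h1.L.sep)
      fix \<psi> assume p: "\<psi> \<in> h2.D"
      show "\<psi> (Def1 x y \<eta>) = \<psi> (mzero L1)"
        using ce[of x "\<lambda>_. 0" y "\<lambda>_. 0" \<eta> \<psi> \<eta> "\<lambda>_. 0"] a p by simp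
    qed (use a in auto)
  qed
  have A: ANC using M1 by (rule MP1_ANC)
  have M2: sw.MP1 unfolding sw.MP1_def
  proof (intro ballI)
    fix \<xi> \<eta> y assume a: "\<xi> \<in> C2" "\<eta> \<in> C2" "y \<in> C1"
    show "sw.Def1 \<xi> \<eta> y = mzero L2"
    proof (rule h1.M.sep)
      fix \<phi> assume p: "\<phi> \<in> h1.D"
      show "\<phi> (sw.Def1 \<xi> \<eta> y) = \<phi> (mzero L2)"
        using ce[of y \<phi> y "\<lambda>_. 0" \<xi> "\<lambda>_. 0" \<eta> "\<lambda>_. 0"] a p A unfolding ANC_def by simp
    qed (use a in auto)
  qed
  show "MP1 \<and> sw.MP1 \<and> ANC" using M1 M2 A by simp
next
  assume "MP1 \<and> sw.MP1 \<and> ANC"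
  then have M1: MP1 and M2: sw.MP1 and A: ANC by auto
  show COND unfolding COND_def
  proof (intro ballI)
    fix X Y \<alpha> \<beta> assume "X \<in> mcarrier LL" "Y \<in> mcarrier LL" "\<alpha> \<in> mcarrier DD" "\<beta> \<in> mcarrier DD"
    then obtain x \<phi> y \<phi>' \<xi> \<psi> \<eta> \<chi> where e: "X = (x,\<phi>)" "Y = (y,\<phi>')" "\<alpha> = (\<xi>,\<psi>)" "\<beta> = (\<eta>,\<chi>)"
      and c: "x \<in> C1" "\<phi> \<in> h1.D" "y \<in> C1" "\<phi>' \<in> h1.D" "\<xi> \<in> C2" "\<psi> \<in> h2.D" "\<eta> \<in> C2" "\<chi> \<in> h2.D"
      by (cases X; cases Y; cases \<alpha>; cases \<beta>) auto
    have z: "Def1 x y \<eta> = mzero L1" "Def1 x y \<xi> = mzero L1" "sw.Def1 \<xi> \<eta> y = mzero L2" "sw.Def1 \<xi> \<eta> x = mzero L2"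
      using M1 M2 c unfolding MP1_def sw.MP1_def by auto
    have d: "Dl y \<xi> c = 0" "Dl y \<eta> c = 0" "Dl x \<xi> c = 0" "Dl x \<eta> c = 0" for c
      using A c unfolding ANC_def by auto
    show "dstar DD natpair (lbr LL X Y) \<alpha> \<beta> =
          gbr21 LL DD natpair (dstar DD natpair X) Y \<alpha> \<beta> + gbr12 LL DD natpair X (dstar DD natpair Y) \<alpha> \<beta>"
    proof -
      have E0: "- \<psi> (Def1 x y \<eta>) + \<chi> (Def1 x y \<xi>) + Dl y \<xi> (\<phi> \<eta>) - Dl y \<eta> (\<phi> \<xi>) - \<phi> (sw.Def1 \<xi> \<eta> y)
     - Dl x \<xi> (\<phi>' \<eta>) + Dl x \<eta> (\<phi>' \<xi>) + \<phi>' (sw.Def1 \<xi> \<eta> x) = 0"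
        using z d c by simp
      have "dstar DD natpair (lbr LL (x,\<phi>) (y,\<phi>')) (\<xi>,\<psi>) (\<eta>,\<chi>)
     - (gbr21 LL DD natpair (dstar DD natpair (x,\<phi>)) (y,\<phi>') (\<xi>,\<psi>) (\<eta>,\<chi>)
        + gbr12 LL DD natpair (x,\<phi>) (dstar DD natpair (y,\<phi>')) (\<xi>,\<psi>) (\<eta>,\<chi>)) = 0"
        by (rule trans[OF cond_expand[OF c] E0])
      then show ?thesis unfolding e by (simp only: right_minus_eq)
    qed
  qed
qed

lemma almost: "almost_twilled \<iota> L1 L2 act12 act21"
  unfolding almost_twilled_def using h1.L.lr h2.L.lr h1.lm h2.lm by blast

lemma main: "twilled \<iota> L1 L2 act12 act21 \<longleftrightarrow> lr_bialgebra \<iota> LL DD natpair"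
proof -
  have P: "(\<lambda>\<alpha> z. if z \<in> mcarrier LL then natpair \<alpha> z else 0) = Phi"
    by (simp add: Phi_def fun_eq_iff)
  have "lr_bialgebra \<iota> LL DD natpair \<longleftrightarrow> COND"
    unfolding lr_bialgebra_def P COND_def
    using h1.S_lr h2.S_lr h1.S_fgp h2.S_fgp Phi_alin Phi_bij by blast
  moreover have "twilled \<iota> L1 L2 act12 act21 \<longleftrightarrow> lr_alg \<iota> T"
    unfolding twilled_def using almost by blast
  ultimately show ?thesis using T_lr_iff COND_iff by blast
qed

end

theorem corollary4p9:
  fixes \<iota> :: "'r::comm_ring_1 \<Rightarrow> 'a::comm_ring_1"
    and L1 :: "('a,'l1) lr" and L2 :: "('a,'l2) lr"
    and act12 :: "'l1 \<Rightarrow> 'l2 \<Rightarrow> 'l2" and act21 :: "'l2 \<Rightarrow> 'l1 \<Rightarrow> 'l1"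
  assumes "(2::'r) dvd 1" and "(3::'r) dvd 1"
    and "alg_map \<iota>"
    and "almost_twilled \<iota> L1 L2 act12 act21"
    and "fgp L1" and "fgp L2"
  shows "twilled \<iota> L1 L2 act12 act21 \<longleftrightarrow>
         lr_bialgebra \<iota> (semid L1 L2 act12) (semid L2 L1 act21) natpair"
proof -
  obtain n1 i1 p1 where f1: "alin L1 (freemod n1) i1" "alin (freemod n1) L1 p1" "\<forall>x\<in>mcarrier L1. p1 (i1 x) = x"
    using assms(5) unfolding fgp_def by blast
  obtain n2 i2 p2 where f2: "alin L2 (freemod n2) i2" "alin (freemod n2) L2 p2" "\<forall>x\<in>mcarrier L2. p2 (i2 x) = x"
    using assms(6) unfolding fgp_def by blast
  have a1: "amodule L1" and a2: "amodule L2" using assms(5,6) unfolding fgp_def by auto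
  have at: "lr_alg \<iota> L1" "lr_alg \<iota> L2" "lr_module L1 L2 act12" "lr_module L2 L1 act21"
    using assms(4) unfolding almost_twilled_def by auto
  interpret full L1 n1 i1 p1 \<iota> L2 n2 i2 p2 act12 act21
    by (unfold_locales) (use f1 f2 a1 a2 at assms(3) in auto)
  show ?thesis by (rule main)
qed

end
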